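(* Let $P$ be a program, $G$ a p-goal and $S$ a scheduling rule. Suppose every infinite p-SLD derivation of $G$ in $P$ via $S$ is pruned by p-$EVR_L$. Then there is a finite bound $l$ such that every resolvent $R$ occurring in any p-SLD derivation of $G$ in $P$ via $S$ satisfies $\#R\le l$.
   Context: A p-atom is a pair $a[p]$ of an atom $a$ and a rational priority $p$. A p-goal is a finite set of p-atoms with pairwise distinct priorities, regarded as a list ordered by increasing priority; $\#G$ is its number of p-atoms. Substitutions act on atoms and leave priorities unchanged. A clause is $h\leftarrow B$ with $h$ an atom and $B$ a p-goal; a program is a finite set of clauses. For p-goals with no common priority, $F+G=F\cup G$; $F|G$ denotes $F+G$ when all priorities of $F$ are smaller than those of $G$. A shifting $\underline{\pi}$ is a strictly increasing bijection $\mathbb{Q}\to\mathbb{Q}$ acting on priorities. Priority derivation step: for a p-goal $a|F$ ($a$ of least priority), clause $c=(h\leftarrow B)$, renaming $\xi$ with $var(a|F)\cap var(c\xi)=\emptyset$, idempotent relevant mgu $\theta$ of $a$ and $h\xi$, shifting $\underline{\pi}$ with $F$, $B\xi\underline{\pi}$ sharing no priority: $a|F\xrightarrow{c\xi,\theta}(F+B\xi\underline{\pi})\theta$. A p-SLD derivation of $G_0$ in $P$ is a finite or infinite sequence $G_0\xrightarrow{c_0\xi_0,\theta_0}G_1\xrightarrow{c_1\xi_1,\theta_1}\cdots$ of such steps with $c_j\in P$ and each $c_j\xi_j$ variable-disjoint from $G_0$ and all earlier renamed clauses; it is via $S$ if all its steps belong to $S$. Lowering: for $c=(h\leftarrow B)$,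 a step $a\lambda\underline{\sigma}|(K\lambda\underline{\sigma}+X)\xrightarrow{c}(X+K\lambda\underline{\sigma}+B\xi''\underline{\theta}'')\alpha''$ is a lowering by $X$ of $a|K\xrightarrow{c}(K+B\xi'\underline{\theta}')\alpha'$; a congruent lowering if some shifting $\underline{\rho}$ has $K\underline{\rho}=K\underline{\sigma}$ and $B\underline{\theta}'\underline{\rho}=B\underline{\theta}''$. Steps are (congruent) lowerings of each other if each is a (congruent) lowering of the other. A set $S$ of steps is deterministic if any two steps of $S$ that are lowerings of each other are congruent lowerings of each other; complete if (i) whenever some step $G\xrightarrow{c}\cdot$ exists, some step $G\xrightarrow{c}\cdot$ lies in $S$, and (ii) $S$ contains every step that is a congruent lowering of each other with a step of $S$. A scheduling rule is a complete deterministic set of priority derivation steps. p-$EVR_L$ check: a derivation $G_0\xrightarrow{\theta_0}G_1\xrightarrow{\theta_1}\cdots$ is pruned by p-$EVR_L$ if there exist $0\le i<j$, a renaming $\tau$ and a shifting $\underline{\tau}$ with $G_0\theta_0\cdots\theta_{j-1}=G_0\theta_0\cdots\theta_{i-1}\tau$ and $G_j=G_i\tau\underline{\tau}$. *)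

theory Defs
  imports Main "HOL-Library.Extended_Nat"
begin

datatype ('f, 'v) trm = Var 'v | Fn 'f "('f, 'v) trm list"

type_synonym ('f, 'v) atom = "'f \<times> ('f, 'v) trm list"
type_synonym ('f, 'v) subst = "'v \<Rightarrow> ('f, 'v) trm"

fun subst_trm :: "('f, 'v) subst \<Rightarrow> ('f, 'v) trm \<Rightarrow> ('f, 'v) trm" where
  "subst_trm \<sigma> (Var x) = \<sigma> x"
| "subst_trm \<sigma> (Fn f ts) = Fn f (map (subst_trm \<sigma>) ts)"

fun vars_trm :: "('f, 'v) trm \<Rightarrow> 'v set" where
  "vars_trm (Var x) = {x}"
| "vars_trm (Fn f ts) = (\<Union>t\<in>set ts. vars_trm t)"

definition subst_atom :: "('f, 'v) subst \<Rightarrow> ('f, 'v) atom \<Rightarrow> ('f, 'v) atom" where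
  "subst_atom \<sigma> a = (fst a, map (subst_trm \<sigma>) (snd a))"

definition vars_atom :: "('f, 'v) atom \<Rightarrow> 'v set" where
  "vars_atom a = (\<Union>t\<in>set (snd a). vars_trm t)"

definition subst_comp :: "('f, 'v) subst \<Rightarrow> ('f, 'v) subst \<Rightarrow> ('f, 'v) subst" where
  "subst_comp \<sigma> \<tau> = (\<lambda>x. subst_trm \<tau> (\<sigma> x))"

definition subst_dom :: "('f, 'v) subst \<Rightarrow> 'v set" where
  "subst_dom \<sigma> = {x. \<sigma> x \<noteq> Var x}"

definition subst_range_vars :: "('f, 'v) subst \<Rightarrow> 'v set" where
  "subst_range_vars \<sigma> = (\<Union>x\<in>subst_dom \<sigma>. vars_trm (\<sigma> x))"

definition idempotent :: "('f, 'v) subst \<Rightarrow> bool" where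
  "idempotent \<theta> \<longleftrightarrow> subst_comp \<theta> \<theta> = \<theta>"

definition unifier :: "('f, 'v) subst \<Rightarrow> ('f, 'v) atom \<Rightarrow> ('f, 'v) atom \<Rightarrow> bool" where
  "unifier \<theta> a b \<longleftrightarrow> subst_atom \<theta> a = subst_atom \<theta> b"

definition is_mgu :: "('f, 'v) subst \<Rightarrow> ('f, 'v) atom \<Rightarrow> ('f, 'v) atom \<Rightarrow> bool" where
  "is_mgu \<theta> a b \<longleftrightarrow> unifier \<theta> a b \<and> (\<forall>\<sigma>. unifier \<sigma> a b \<longrightarrow> (\<exists>\<delta>. \<sigma> = subst_comp \<theta> \<delta>))"

definition relevant :: "('f, 'v) subst \<Rightarrow> ('f, 'v) atom \<Rightarrow> ('f, 'v) atom \<Rightarrow> bool" where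
  "relevant \<theta> a b \<longleftrightarrow> subst_dom \<theta> \<union> subst_range_vars \<theta> \<subseteq> vars_atom a \<union> vars_atom b"

definition renaming :: "('f, 'v) subst \<Rightarrow> bool" where
  "renaming \<xi> \<longleftrightarrow> (\<exists>f. bij f \<and> \<xi> = (\<lambda>x. Var (f x)))"

type_synonym ('f, 'v) patom = "('f, 'v) atom \<times> rat"
type_synonym ('f, 'v) pgoal = "('f, 'v) patom set"

definition is_pgoal :: "('f, 'v) pgoal \<Rightarrow> bool" where
  "is_pgoal G \<longleftrightarrow> finite G \<and> inj_on snd G"

definition prios :: "('f, 'v) pgoal \<Rightarrow> rat set" where
  "prios G = snd ` G"

definition subst_goal :: "('f, 'v) subst \<Rightarrow> ('f, 'v) pgoal \<Rightarrow> ('f, 'v) pgoal" where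
  "subst_goal \<sigma> G = (\<lambda>(a, p). (subst_atom \<sigma> a, p)) ` G"

definition vars_goal :: "('f, 'v) pgoal \<Rightarrow> 'v set" where
  "vars_goal G = (\<Union>q\<in>G. vars_atom (fst q))"

definition shifting :: "(rat \<Rightarrow> rat) \<Rightarrow> bool" where
  "shifting \<pi> \<longleftrightarrow> strict_mono \<pi> \<and> bij \<pi>"

definition shift_goal :: "(rat \<Rightarrow> rat) \<Rightarrow> ('f, 'v) pgoal \<Rightarrow> ('f, 'v) pgoal" where
  "shift_goal \<pi> G = (\<lambda>(a, p). (a, \<pi> p)) ` G"

definition pgoal_split :: "('f, 'v) pgoal \<Rightarrow> ('f, 'v) patom \<Rightarrow> ('f, 'v) pgoal \<Rightarrow> bool" where
  "pgoal_split G a F \<longleftrightarrow> G = insert a F \<and> (\<forall>q\<in>F. snd a < snd q)"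

definition subst_patom :: "('f, 'v) subst \<Rightarrow> ('f, 'v) patom \<Rightarrow> ('f, 'v) patom" where
  "subst_patom \<sigma> q = (subst_atom \<sigma> (fst q), snd q)"

type_synonym ('f, 'v) clause = "('f, 'v) atom \<times> ('f, 'v) pgoal"

definition is_clause :: "('f, 'v) clause \<Rightarrow> bool" where
  "is_clause c \<longleftrightarrow> is_pgoal (snd c)"

definition program :: "('f, 'v) clause set \<Rightarrow> bool" where
  "program P \<longleftrightarrow> finite P \<and> (\<forall>c\<in>P. is_clause c)"

definition subst_clause :: "('f, 'v) subst \<Rightarrow> ('f, 'v) clause \<Rightarrow> ('f, 'v) clause" where
  "subst_clause \<sigma> c = (subst_atom \<sigma> (fst c), subst_goal \<sigma> (snd c))"

definition vars_clause :: "('f, 'v) clause \<Rightarrow> 'v set" where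
  "vars_clause c = vars_atom (fst c) \<union> vars_goal (snd c)"

text \<open>A step records: source goal, clause c (of the program, unrenamed), renaming \<xi>,
  mgu \<theta>, shifting \<pi>, resolvent.\<close>
datatype ('f, 'v) pstep =
  PStep (st_src: "('f, 'v) pgoal") (st_clause: "('f, 'v) clause") (st_ren: "('f, 'v) subst")
        (st_mgu: "('f, 'v) subst") (st_shift: "rat \<Rightarrow> rat") (st_tgt: "('f, 'v) pgoal")

definition is_step :: "('f, 'v) pstep \<Rightarrow> bool" where
  "is_step s \<longleftrightarrow> (let G = st_src s; c = st_clause s; \<xi> = st_ren s; \<theta> = st_mgu s;
                      \<pi> = st_shift s; h = fst c; B = snd c in
     is_pgoal G \<and> is_clause c \<and> renaming \<xi> \<and> shifting \<pi> \<and>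
     vars_goal G \<inter> vars_clause (subst_clause \<xi> c) = {} \<and>
     (\<exists>a F. pgoal_split G a F \<and>
        idempotent \<theta> \<and> is_mgu \<theta> (fst a) (subst_atom \<xi> h) \<and> relevant \<theta> (fst a) (subst_atom \<xi> h) \<and>
        prios F \<inter> prios (shift_goal \<pi> (subst_goal \<xi> B)) = {} \<and>
        st_tgt s = subst_goal \<theta> (F \<union> shift_goal \<pi> (subst_goal \<xi> B))))"

text \<open>The witness data of "s2 is a lowering by X of s1": s1 = a|K -c-> ..., and
  s2 = a\<lambda>\<sigma> | (K\<lambda>\<sigma> + X) -c-> ... (resolvent shapes are forced by is_step).\<close>
definition lowering_wit ::
  "('f, 'v) pgoal \<Rightarrow> ('f, 'v) patom \<Rightarrow> ('f, 'v) pgoal \<Rightarrow> ('f, 'v) subst \<Rightarrow> (rat \<Rightarrow> rat)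
   \<Rightarrow> ('f, 'v) pstep \<Rightarrow> ('f, 'v) pstep \<Rightarrow> bool" where
  "lowering_wit X a K lam \<sigma> s2 s1 \<longleftrightarrow>
     is_step s1 \<and> is_step s2 \<and> st_clause s2 = st_clause s1 \<and> shifting \<sigma> \<and>
     pgoal_split (st_src s1) a K \<and>
     prios X \<inter> prios (shift_goal \<sigma> (subst_goal lam K)) = {} \<and>
     pgoal_split (st_src s2) (apfst (subst_atom lam) (apsnd \<sigma> a)) (shift_goal \<sigma> (subst_goal lam K) \<union> X)"

definition lowering_by :: "('f, 'v) pgoal \<Rightarrow> ('f, 'v) pstep \<Rightarrow> ('f, 'v) pstep \<Rightarrow> bool" where
  "lowering_by X s2 s1 \<longleftrightarrow> (\<exists>a K lam \<sigma>. lowering_wit X a K lam \<sigma> s2 s1)"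

definition lowering :: "('f, 'v) pstep \<Rightarrow> ('f, 'v) pstep \<Rightarrow> bool" where
  "lowering s2 s1 \<longleftrightarrow> (\<exists>X. lowering_by X s2 s1)"

definition congruent_lowering :: "('f, 'v) pstep \<Rightarrow> ('f, 'v) pstep \<Rightarrow> bool" where
  "congruent_lowering s2 s1 \<longleftrightarrow>
     (\<exists>X a K lam \<sigma> \<rho>. lowering_wit X a K lam \<sigma> s2 s1 \<and> shifting \<rho> \<and>
        shift_goal \<rho> K = shift_goal \<sigma> K \<and>
        shift_goal \<rho> (shift_goal (st_shift s1) (snd (st_clause s1)))
          = shift_goal (st_shift s2) (snd (st_clause s1)))"

definition mutual_lowering :: "('f, 'v) pstep \<Rightarrow> ('f, 'v) pstep \<Rightarrow> bool" where
  "mutual_lowering s1 s2 \<longleftrightarrow> lowering s1 s2 \<and> lowering s2 s1"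

definition mutual_congruent_lowering :: "('f, 'v) pstep \<Rightarrow> ('f, 'v) pstep \<Rightarrow> bool" where
  "mutual_congruent_lowering s1 s2 \<longleftrightarrow> congruent_lowering s1 s2 \<and> congruent_lowering s2 s1"

definition deterministic :: "('f, 'v) pstep set \<Rightarrow> bool" where
  "deterministic S \<longleftrightarrow> (\<forall>s1\<in>S. \<forall>s2\<in>S. mutual_lowering s1 s2 \<longrightarrow> mutual_congruent_lowering s1 s2)"

definition complete_steps :: "('f, 'v) pstep set \<Rightarrow> bool" where
  "complete_steps S \<longleftrightarrow>
     (\<forall>G c. (\<exists>s. is_step s \<and> st_src s = G \<and> st_clause s = c) \<longrightarrow>
            (\<exists>s\<in>S. st_src s = G \<and> st_clause s = c)) \<and>
     (\<forall>s\<in>S. \<forall>s'. mutual_congruent_lowering s' s \<longrightarrow> s' \<in> S)"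

definition scheduling_rule :: "('f, 'v) pstep set \<Rightarrow> bool" where
  "scheduling_rule S \<longleftrightarrow> (\<forall>s\<in>S. is_step s) \<and> complete_steps S \<and> deterministic S"

text \<open>A derivation of G0 with n steps (n = \<infinity> for infinite derivations), given by ds 0, ds 1, ...\<close>
fun goal_at :: "('f, 'v) pgoal \<Rightarrow> (nat \<Rightarrow> ('f, 'v) pstep) \<Rightarrow> nat \<Rightarrow> ('f, 'v) pgoal" where
  "goal_at G0 ds 0 = G0"
| "goal_at G0 ds (Suc j) = st_tgt (ds j)"

definition renamed_clause :: "('f, 'v) pstep \<Rightarrow> ('f, 'v) clause" where
  "renamed_clause s = subst_clause (st_ren s) (st_clause s)"

definition pSLD :: "('f, 'v) clause set \<Rightarrow> ('f, 'v) pstep set \<Rightarrow> ('f, 'v) pgoal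
                    \<Rightarrow> enat \<Rightarrow> (nat \<Rightarrow> ('f, 'v) pstep) \<Rightarrow> bool" where
  "pSLD P S G0 n ds \<longleftrightarrow>
     (\<forall>j. enat j < n \<longrightarrow>
        is_step (ds j) \<and> ds j \<in> S \<and> st_clause (ds j) \<in> P \<and>
        st_src (ds j) = goal_at G0 ds j \<and>
        vars_clause (renamed_clause (ds j)) \<inter>
          (vars_goal G0 \<union> (\<Union>i<j. vars_clause (renamed_clause (ds i)))) = {})"

fun inst_at :: "('f, 'v) pgoal \<Rightarrow> (nat \<Rightarrow> ('f, 'v) pstep) \<Rightarrow> nat \<Rightarrow> ('f, 'v) pgoal" where
  "inst_at G0 ds 0 = G0"
| "inst_at G0 ds (Suc k) = subst_goal (st_mgu (ds k)) (inst_at G0 ds k)"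

definition pruned_EVR :: "('f, 'v) pgoal \<Rightarrow> enat \<Rightarrow> (nat \<Rightarrow> ('f, 'v) pstep) \<Rightarrow> bool" where
  "pruned_EVR G0 n ds \<longleftrightarrow>
     (\<exists>i j \<tau> \<tau>s. i < j \<and> enat j \<le> n \<and> renaming \<tau> \<and> shifting \<tau>s \<and>
        inst_at G0 ds j = subst_goal \<tau> (inst_at G0 ds i) \<and>
        goal_at G0 ds j = shift_goal \<tau>s (subst_goal \<tau> (goal_at G0 ds i)))"

end

theory Submission
  imports Defs
begin

definition ren :: "('v \<Rightarrow> 'v) \<Rightarrow> ('f, 'v) subst" where
  "ren f = (\<lambda>x. Var (f x))"

lemma subst_trm_comp: "subst_trm (subst_comp \<sigma> \<tau>) t = subst_trm \<tau> (subst_trm \<sigma> t)"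
  by (induction t) (auto simp: subst_comp_def)

lemma subst_trm_cong: "(\<And>x. x \<in> vars_trm t \<Longrightarrow> \<sigma> x = \<tau> x) \<Longrightarrow> subst_trm \<sigma> t = subst_trm \<tau> t"
  by (induction t) auto

lemma subst_trm_Var[simp]: "subst_trm Var t = t"
  by (induction t) (auto simp: map_idI)

lemma vars_trm_subst: "vars_trm (subst_trm \<sigma> t) = (\<Union>x\<in>vars_trm t. vars_trm (\<sigma> x))"
  by (induction t) auto

lemma finite_vars_trm[simp]: "finite (vars_trm t)"
  by (induction t) auto

lemma map_fix: "map f xs = xs \<Longrightarrow> x \<in> set xs \<Longrightarrow> f x = x"
  by (induction xs) auto

lemma subst_trm_fix: "subst_trm \<sigma> t = t \<Longrightarrow> x \<in> vars_trm t \<Longrightarrow> \<sigma> x = Var x"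
proof (induction t)
  case (Var y) then show ?case by simp
next
  case (Fn f ts)
  then obtain t where t: "t \<in> set ts" "x \<in> vars_trm t" by auto
  from Fn.prems(1) have "map (subst_trm \<sigma>) ts = ts" by simp
  then have "subst_trm \<sigma> t = t" using t(1) by (rule map_fix)
  then show ?case using Fn.IH t by blast
qed

lemma subst_atom_comp: "subst_atom (subst_comp \<sigma> \<tau>) a = subst_atom \<tau> (subst_atom \<sigma> a)"
  by (simp add: subst_atom_def subst_trm_comp)

lemma subst_atom_cong: "(\<And>x. x \<in> vars_atom a \<Longrightarrow> \<sigma> x = \<tau> x) \<Longrightarrow> subst_atom \<sigma> a = subst_atom \<tau> a"
  unfolding subst_atom_def vars_atom_def by (auto intro!: subst_trm_cong)

lemma subst_atom_Var[simp]: "subst_atom Var a = a"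
  by (simp add: subst_atom_def map_idI)

lemma vars_atom_subst: "vars_atom (subst_atom \<sigma> a) = (\<Union>x\<in>vars_atom a. vars_trm (\<sigma> x))"
  by (auto simp: vars_atom_def subst_atom_def vars_trm_subst)

lemma finite_vars_atom[simp]: "finite (vars_atom a)"
  by (simp add: vars_atom_def)

lemma subst_atom_fix: "subst_atom \<sigma> a = a \<Longrightarrow> x \<in> vars_atom a \<Longrightarrow> \<sigma> x = Var x"
proof -
  assume a: "subst_atom \<sigma> a = a" "x \<in> vars_atom a"
  then obtain t where t: "t \<in> set (snd a)" "x \<in> vars_trm t" by (auto simp: vars_atom_def)
  from a(1) have "map (subst_trm \<sigma>) (snd a) = snd a"
    by (metis snd_conv subst_atom_def)
  then have "subst_trm \<sigma> t = t" using t(1) by (rule map_fix)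
  then show ?thesis using t(2) by (rule subst_trm_fix)
qed

lemma subst_goal_comp: "subst_goal \<tau> (subst_goal \<sigma> G) = subst_goal (subst_comp \<sigma> \<tau>) G"
  by (auto simp: subst_goal_def image_image subst_atom_comp split_def)

lemma shift_goal_comp: "shift_goal \<sigma> (shift_goal \<pi> G) = shift_goal (\<sigma> \<circ> \<pi>) G"
  by (auto simp: shift_goal_def image_image split_def)

lemma shift_subst_comm: "shift_goal \<pi> (subst_goal \<sigma> G) = subst_goal \<sigma> (shift_goal \<pi> G)"
  by (auto simp: shift_goal_def subst_goal_def image_image split_def)

lemma subst_goal_Un: "subst_goal \<sigma> (A \<union> B) = subst_goal \<sigma> A \<union> subst_goal \<sigma> B"
  by (simp add: subst_goal_def image_Un)

lemma shift_goal_Un: "shift_goal \<sigma> (A \<union> B) = shift_goal \<sigma> A \<union> shift_goal \<sigma> B"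
  by (simp add: shift_goal_def image_Un)

lemma subst_goal_insert: "subst_goal \<sigma> (insert a A) = insert (subst_patom \<sigma> a) (subst_goal \<sigma> A)"
  by (simp add: subst_goal_def subst_patom_def split_def)

lemma shift_goal_insert: "shift_goal \<sigma> (insert a A) = insert (fst a, \<sigma> (snd a)) (shift_goal \<sigma> A)"
  by (simp add: shift_goal_def split_def)

lemma subst_goal_empty[simp]: "subst_goal \<sigma> {} = {}" by (simp add: subst_goal_def)
lemma shift_goal_empty[simp]: "shift_goal \<sigma> {} = {}" by (simp add: shift_goal_def)

lemma subst_goal_Var[simp]: "subst_goal Var G = G"
  by (simp add: subst_goal_def split_def)

lemma shift_goal_id[simp]: "shift_goal id G = G"
  by (simp add: shift_goal_def split_def)

lemma shift_goal_cong: "(\<And>p. p \<in> prios G \<Longrightarrow> \<sigma> p = \<tau> p) \<Longrightarrow> shift_goal \<sigma> G = shift_goal \<tau> G"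
  by (force simp: shift_goal_def prios_def split_def intro!: image_cong)

lemma vars_goal_finite[simp]: "finite G \<Longrightarrow> finite (vars_goal G)"
  by (simp add: vars_goal_def)

lemma subst_goal_cong: "(\<And>x. x \<in> vars_goal G \<Longrightarrow> \<sigma> x = \<tau> x) \<Longrightarrow> subst_goal \<sigma> G = subst_goal \<tau> G"
  unfolding subst_goal_def vars_goal_def split_def
  by (rule image_cong) (auto intro!: subst_atom_cong)

lemma vars_goal_subst: "vars_goal (subst_goal \<sigma> G) = (\<Union>x\<in>vars_goal G. vars_trm (\<sigma> x))"
  by (auto simp: vars_goal_def subst_goal_def vars_atom_subst split_def)

lemma vars_goal_shift[simp]: "vars_goal (shift_goal \<pi> G) = vars_goal G"
  by (auto simp: vars_goal_def shift_goal_def split_def)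

lemma prios_subst[simp]: "prios (subst_goal \<sigma> G) = prios G"
  by (force simp: prios_def subst_goal_def split_def image_image)

lemma prios_shift[simp]: "prios (shift_goal \<pi> G) = \<pi> ` prios G"
  by (force simp: prios_def shift_goal_def split_def image_image)

lemma prios_Un[simp]: "prios (A \<union> B) = prios A \<union> prios B"
  by (simp add: prios_def image_Un)

lemma prios_empty[simp]: "prios {} = {}"
  by (simp add: prios_def)

lemma finite_subst_goal[simp]: "finite G \<Longrightarrow> finite (subst_goal \<sigma> G)"
  by (simp add: subst_goal_def)

lemma finite_shift_goal[simp]: "finite G \<Longrightarrow> finite (shift_goal \<sigma> G)"
  by (simp add: shift_goal_def)


lemma vars_trm_ren[simp]: "vars_trm (subst_trm (ren f) t) = f ` vars_trm t"
  by (auto simp: vars_trm_subst ren_def)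

lemma vars_atom_ren[simp]: "vars_atom (subst_atom (ren f) a) = f ` vars_atom a"
  by (auto simp: vars_atom_subst ren_def)

lemma vars_goal_ren[simp]: "vars_goal (subst_goal (ren f) G) = f ` vars_goal G"
  by (auto simp: vars_goal_subst ren_def)

lemma subst_comp_ren: "subst_comp (ren f) (ren g) = ren (g \<circ> f)"
  by (simp add: subst_comp_def ren_def)

lemma ren_id: "ren id = Var" by (simp add: ren_def fun_eq_iff)

lemma ren_inv_trm: "bij f \<Longrightarrow> subst_trm (ren (inv f)) (subst_trm (ren f) t) = t"
  by (simp add: subst_trm_comp[symmetric] subst_comp_ren bij_is_inj ren_id[symmetric]
      flip: o_def) (simp add: ren_id bij_is_inj)

lemma ren_inv_trm2: "bij f \<Longrightarrow> subst_trm (ren f) (subst_trm (ren (inv f)) t) = t"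
  using ren_inv_trm[of "inv f" t] by (simp add: bij_imp_bij_inv inv_inv_eq)

lemma ren_inj_trm: "bij f \<Longrightarrow> subst_trm (ren f) s = subst_trm (ren f) t \<longleftrightarrow> s = t"
  by (metis ren_inv_trm)

lemma ren_inv_atom: "bij f \<Longrightarrow> subst_atom (ren (inv f)) (subst_atom (ren f) a) = a"
  by (simp add: subst_atom_comp[symmetric] subst_comp_ren bij_is_inj ren_id[symmetric]
      flip: o_def) (simp add: ren_id bij_is_inj)

lemma ren_inv_atom2: "bij f \<Longrightarrow> subst_atom (ren f) (subst_atom (ren (inv f)) a) = a"
  using ren_inv_atom[of "inv f" a] by (simp add: bij_imp_bij_inv inv_inv_eq)

lemma ren_inj_atom: "bij f \<Longrightarrow> subst_atom (ren f) s = subst_atom (ren f) t \<longleftrightarrow> s = t"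
  by (metis ren_inv_atom)

lemma ren_inv_goal: "bij f \<Longrightarrow> subst_goal (ren (inv f)) (subst_goal (ren f) G) = G"
  by (simp add: subst_goal_comp subst_comp_ren bij_is_inj ren_id)

lemma renaming_ren: "bij f \<Longrightarrow> renaming (ren f)"
  by (auto simp: renaming_def ren_def)

lemma renaming_E: "renaming \<xi> \<Longrightarrow> \<exists>h. bij h \<and> \<xi> = ren h"
  by (auto simp: renaming_def ren_def)

lemma shifting_id: "shifting id"
  by (simp add: shifting_def strict_mono_def)

lemma shifting_comp: "shifting \<sigma> \<Longrightarrow> shifting \<pi> \<Longrightarrow> shifting (\<sigma> \<circ> \<pi>)"
  by (auto simp: shifting_def strict_mono_def bij_comp)

lemma shifting_inv: "shifting \<sigma> \<Longrightarrow> shifting (inv \<sigma>)"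
  unfolding shifting_def
proof (intro conjI)
  assume a: "strict_mono \<sigma> \<and> bij \<sigma>"
  show "bij (inv \<sigma>)" using a bij_imp_bij_inv by blast
  show "strict_mono (inv \<sigma>)"
  proof (rule strict_monoI)
    fix x y :: rat assume "x < y"
    have "\<sigma> (inv \<sigma> x) = x" "\<sigma> (inv \<sigma> y) = y" using a by (simp_all add: surj_f_inv_f bij_is_surj)
    then show "inv \<sigma> x < inv \<sigma> y" using a \<open>x < y\<close>
      by (metis not_less_iff_gr_or_eq strict_mono_less)
  qed
qed

lemma shifting_inj: "shifting \<sigma> \<Longrightarrow> inj \<sigma>"
  by (simp add: shifting_def bij_is_inj)

lemma shifting_inv_l[simp]: "shifting \<sigma> \<Longrightarrow> inv \<sigma> (\<sigma> x) = x"
  by (simp add: shifting_inj)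

lemma shifting_inv_r[simp]: "shifting \<sigma> \<Longrightarrow> \<sigma> (inv \<sigma> x) = x"
  by (simp add: shifting_def bij_is_surj surj_f_inv_f)

lemma shift_inv_goal: "shifting \<sigma> \<Longrightarrow> shift_goal (inv \<sigma>) (shift_goal \<sigma> G) = G"
  by (simp add: shift_goal_comp o_def flip: id_def)

lemma strict_mono_fix_finite:
  fixes \<sigma> :: "'a::linorder \<Rightarrow> 'a"
  assumes "strict_mono \<sigma>" "finite A" "\<sigma> ` A = A"
  shows "\<forall>x\<in>A. \<sigma> x = x"
  using assms(2,3)
proof (induction A rule: finite_psubset_induct)
  case (psubset A)
  show ?case
  proof (cases "A = {}")
    case True then show ?thesis by simp
  next
    case False
    have m: "\<sigma> (Max A) = Max (\<sigma> ` A)"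
      using mono_Max_commute[OF strict_mono_mono[OF assms(1)] psubset.hyps(1) False] .
    then have m2: "\<sigma> (Max A) = Max A" using psubset.prems by metis
    have inj: "inj \<sigma>" using assms(1) strict_mono_imp_inj_on by blast
    have "\<sigma> ` (A - {Max A}) = \<sigma> ` A - \<sigma> ` {Max A}"
      using inj by (rule image_set_diff)
    then have e: "\<sigma> ` (A - {Max A}) = A - {Max A}" using m2 psubset.prems by simp
    have "Max A \<in> A" using False psubset.hyps(1) by simp
    then have s: "A - {Max A} \<subset> A" by blast
    have "\<forall>x\<in>A - {Max A}. \<sigma> x = x" using psubset.IH[OF s e] .
    then show ?thesis using m2 by (metis DiffI singletonD)
  qed
qed
lemma extend_inj_bij:
  fixes k :: "'a \<Rightarrow> 'a"
  assumes "finite A" "inj_on k A"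
  shows "\<exists>g. bij g \<and> (\<forall>x\<in>A. g x = k x)"
proof -
  define D1 where "D1 = k ` A - A"
  define D2 where "D2 = A - k ` A"
  have fin: "finite D1" "finite D2" using assms by (auto simp: D1_def D2_def)
  have ck: "card (k ` A) = card A" using assms by (simp add: card_image)
  have "card D1 = card (k ` A) - card (k ` A \<inter> A)"
    unfolding D1_def using assms(1) by (simp add: card_Diff_subset_Int)
  moreover have "card D2 = card A - card (A \<inter> k ` A)"
    unfolding D2_def using assms(1) by (simp add: card_Diff_subset_Int)
  ultimately have "card D1 = card D2" using ck by (simp add: Int_commute)
  then obtain m where m: "bij_betw m D1 D2" using fin finite_same_card_bij by blast
  define g where "g x = (if x \<in> A then k x else if x \<in> D1 then m x else x)" for x
  have mD: "x \<in> D1 \<Longrightarrow> m x \<in> D2" for x using m by (auto simp: bij_betw_def)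
  have minj: "x \<in> D1 \<Longrightarrow> y \<in> D1 \<Longrightarrow> m x = m y \<Longrightarrow> x = y" for x y
    using m by (auto simp: bij_betw_def inj_on_def)
  have D1A: "x \<in> D1 \<Longrightarrow> x \<notin> A" for x by (simp add: D1_def)
  have D2A: "x \<in> D2 \<Longrightarrow> x \<in> A \<and> x \<notin> k ` A" for x by (simp add: D2_def)
  have c1: "x = y" if "x \<in> A" "g x = g y" for x y
  proof -
    have gx: "g x = k x" using that by (simp add: g_def)
    show ?thesis
    proof (cases "y \<in> A")
      case True
      then have "k x = k y" using that gx by (simp add: g_def)
      then show ?thesis using assms(2) that(1) True by (simp add: inj_on_def)
    next
      case yA: False
      show ?thesis
      proof (cases "y \<in> D1")
        case True
        then have "k x = m y" using that gx yA by (simp add: g_def)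
        moreover have "m y \<notin> k ` A" using mD[OF True] D2A by blast
        moreover have "k x \<in> k ` A" using that(1) by (rule imageI)
        ultimately show ?thesis by simp
      next
        case False
        then have "k x = y" using that gx yA by (simp add: g_def)
        then have "y \<in> D1" using yA that(1) by (auto simp: D1_def)
        then show ?thesis using False by blast
      qed
    qed
  qed
  have c2: "x = y" if "x \<notin> A" "y \<notin> A" "x \<in> D1" "g x = g y" for x y
  proof (cases "y \<in> D1")
    case True
    then show ?thesis using that minj by (simp add: g_def)
  next
    case False
    then have "m x = y" using that by (simp add: g_def)
    then show ?thesis using mD[OF that(3)] D2A that(2) by blast
  qed
  have c3: "x = y" if "x \<notin> A" "y \<notin> A" "x \<notin> D1" "y \<notin> D1" "g x = g y" for x y
    using that by (simp add: g_def)
  have "inj g"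
  proof (rule injI)
    fix x y assume e: "g x = g y"
    show "x = y"
      using c1[OF _ e] c1[OF _ e[symmetric]] c2[OF _ _ _ e] c2[OF _ _ _ e[symmetric]] c3[OF _ _ _ _ e]
      by blast
  qed
  moreover have "surj g"
  proof -
    have "y \<in> range g" for y
    proof (cases "y \<in> k ` A")
      case True
      then obtain x where x: "x \<in> A" "y = k x" by blast
      then have "g x = y" by (simp add: g_def)
      then show ?thesis using rangeI[of g x] by simp
    next
      case nk: False
      show ?thesis
      proof (cases "y \<in> A")
        case True
        then have "y \<in> D2" using nk by (simp add: D2_def)
        moreover have "D2 = m ` D1" using m by (simp add: bij_betw_def)
        ultimately obtain z where z: "z \<in> D1" "m z = y" by (metis imageE)
        moreover have "z \<notin> A" using z(1) by (simp add: D1_def)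
        ultimately have "g z = y" by (simp add: g_def)
        then show ?thesis using rangeI[of g z] by simp
      next
        case False
        then have "y \<notin> D1" using nk by (simp add: D1_def)
        then have "g y = y" using False by (simp add: g_def)
        then show ?thesis using rangeI[of g y] by simp
      qed
    qed
    then show ?thesis by blast
  qed
  ultimately show ?thesis by (auto simp: bij_def g_def)
qed

lemma extend_inj_bij_fresh:
  fixes h :: "'a \<Rightarrow> 'a"
  assumes inf: "infinite (UNIV :: 'a set)" and "finite A" "finite B" "A \<inter> B = {}" "inj_on h A" "finite Y"
  shows "\<exists>g. bij g \<and> (\<forall>x\<in>A. g x = h x) \<and> g ` B \<inter> Y = {}"
proof -
  have "finite (Y \<union> h ` A)" using assms by simp
  then have "finite (- (Y \<union> h ` A)) \<longleftrightarrow> finite (UNIV :: 'a set)" by (rule finite_compl)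
  then have "infinite (- (Y \<union> h ` A))" using inf by simp
  then obtain C where C: "C \<subseteq> - (Y \<union> h ` A)" "finite C" "card C = card B"
    using infinite_arbitrarily_large[of "- (Y \<union> h ` A)" "card B"] by metis
  then obtain k where k: "bij_betw k B C" using finite_same_card_bij[OF assms(3) C(2)] by metis
  define k' where "k' x = (if x \<in> A then h x else k x)" for x
  have kB: "x \<in> B \<Longrightarrow> k x \<in> C" for x using k by (auto simp: bij_betw_def)
  have "inj_on k' (A \<union> B)"
  proof (rule inj_onI)
    fix x y assume xy: "x \<in> A \<union> B" "y \<in> A \<union> B" "k' x = k' y"
    consider "x \<in> A" "y \<in> A" | "x \<in> A" "y \<in> B" | "x \<in> B" "y \<in> A" | "x \<in> B" "y \<in> B"
      using xy by blast
    then show "x = y"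
    proof cases
      case 1 then show ?thesis using xy assms(5) by (simp add: k'_def inj_on_def)
    next
      case 2 then have "y \<notin> A" using assms(4) by blast
      then have "h x = k y" using 2 xy by (simp add: k'_def)
      moreover have "k y \<notin> h ` A" using kB[OF 2(2)] C(1) by blast
      moreover have "h x \<in> h ` A" using 2(1) by (rule imageI)
      ultimately show ?thesis by simp
    next
      case 3 then have "x \<notin> A" using assms(4) by blast
      then have "k x = h y" using 3 xy by (simp add: k'_def)
      moreover have "k x \<notin> h ` A" using kB[OF 3(1)] C(1) by blast
      moreover have "h y \<in> h ` A" using 3(2) by (rule imageI)
      ultimately show ?thesis by simp
    next
      case 4 then have "x \<notin> A" "y \<notin> A" using assms(4) by blast+
      then have "k x = k y" using 4 xy by (simp add: k'_def)
      then show ?thesis using k 4 by (simp add: bij_betw_def inj_on_def)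
    qed
  qed
  then obtain g where g: "bij g" "\<forall>x\<in>A \<union> B. g x = k' x"
    using extend_inj_bij[of "A \<union> B" k'] assms(2,3) by blast
  have "g ` B \<subseteq> C"
  proof
    fix y assume "y \<in> g ` B"
    then obtain x where x: "x \<in> B" "y = g x" by blast
    then have "x \<notin> A" using assms(4) by blast
    then show "y \<in> C" using x g(2) kB by (simp add: k'_def)
  qed
  then have "g ` B \<inter> Y = {}" using C(1) by blast
  moreover have "\<forall>x\<in>A. g x = h x" using g(2) by (simp add: k'_def)
  ultimately show ?thesis using g(1) by blast
qed

definition conjs :: "('v \<Rightarrow> 'v) \<Rightarrow> ('f, 'v) subst \<Rightarrow> ('f, 'v) subst" where
  "conjs g \<theta> = (\<lambda>x. subst_trm (ren g) (\<theta> (inv g x)))"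

lemma bij_inv_l[simp]: "bij g \<Longrightarrow> inv g (g x) = x"
  by (simp add: bij_is_inj)

lemma bij_inv_r[simp]: "bij g \<Longrightarrow> g (inv g x) = x"
  by (simp add: bij_is_surj surj_f_inv_f)

lemma conj_comp: "bij g \<Longrightarrow> subst_comp (ren g) (conjs g \<theta>) = subst_comp \<theta> (ren g)"
  by (simp add: fun_eq_iff subst_comp_def conjs_def ren_def)

lemma conj_trm: "bij g \<Longrightarrow> subst_trm (conjs g \<theta>) (subst_trm (ren g) t) = subst_trm (ren g) (subst_trm \<theta> t)"
  by (simp add: subst_trm_comp[symmetric] conj_comp)

lemma conj_atom: "bij g \<Longrightarrow> subst_atom (conjs g \<theta>) (subst_atom (ren g) t) = subst_atom (ren g) (subst_atom \<theta> t)"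
  by (simp add: subst_atom_comp[symmetric] conj_comp)

lemma conj_goal: "bij g \<Longrightarrow> subst_goal (conjs g \<theta>) (subst_goal (ren g) G) = subst_goal (ren g) (subst_goal \<theta> G)"
  by (simp add: subst_goal_comp conj_comp)

lemma unifier_conj:
  "bij g \<Longrightarrow> unifier (conjs g \<theta>) (subst_atom (ren g) a) (subst_atom (ren g) b) \<longleftrightarrow> unifier \<theta> a b"
  by (simp add: unifier_def conj_atom ren_inj_atom)

lemma is_mgu_conj:
  assumes g: "bij g" and m: "is_mgu \<theta> a b"
  shows "is_mgu (conjs g \<theta>) (subst_atom (ren g) a) (subst_atom (ren g) b)"
  unfolding is_mgu_def
proof (intro conjI allI impI)
  show "unifier (conjs g \<theta>) (subst_atom (ren g) a) (subst_atom (ren g) b)"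
    using m g by (simp add: unifier_conj is_mgu_def)
next
  fix \<sigma>' assume u: "unifier \<sigma>' (subst_atom (ren g) a) (subst_atom (ren g) b)"
  define \<sigma>0 where "\<sigma>0 = subst_comp (ren g) \<sigma>'"
  have "unifier \<sigma>0 a b" using u by (simp add: unifier_def \<sigma>0_def subst_atom_comp)
  then obtain \<delta> where d: "\<sigma>0 = subst_comp \<theta> \<delta>" using m by (auto simp: is_mgu_def)
  define \<delta>' where "\<delta>' = subst_comp (ren (inv g)) \<delta>"
  have "\<sigma>' x = subst_comp (conjs g \<theta>) \<delta>' x" for x
  proof -
    have "subst_comp (conjs g \<theta>) \<delta>' x = subst_trm \<delta>' (subst_trm (ren g) (\<theta> (inv g x)))"
      by (simp add: subst_comp_def conjs_def)
    also have "\<dots> = subst_trm (subst_comp (ren g) \<delta>') (\<theta> (inv g x))"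
      by (simp add: subst_trm_comp)
    also have "subst_comp (ren g) \<delta>' = \<delta>"
      using g by (simp add: fun_eq_iff subst_comp_def \<delta>'_def ren_def)
    also have "subst_trm \<delta> (\<theta> (inv g x)) = \<sigma>0 (inv g x)"
      by (simp add: d subst_comp_def)
    also have "\<dots> = \<sigma>' x" using g by (simp add: \<sigma>0_def subst_comp_def ren_def)
    finally show ?thesis by simp
  qed
  then show "\<exists>\<delta>. \<sigma>' = subst_comp (conjs g \<theta>) \<delta>" by blast
qed

lemma idempotent_conj: "bij g \<Longrightarrow> idempotent \<theta> \<Longrightarrow> idempotent (conjs g \<theta>)"
  unfolding idempotent_def
proof -
  assume g: "bij g" and i: "subst_comp \<theta> \<theta> = \<theta>"
  have "subst_comp (conjs g \<theta>) (conjs g \<theta>) x = conjs g \<theta> x" for x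
  proof -
    have "subst_comp (conjs g \<theta>) (conjs g \<theta>) x = subst_trm (conjs g \<theta>) (subst_trm (ren g) (\<theta> (inv g x)))"
      by (simp add: subst_comp_def conjs_def[of g \<theta>])
    also have "\<dots> = subst_trm (ren g) (subst_trm \<theta> (\<theta> (inv g x)))"
      using g by (rule conj_trm)
    also have "subst_trm \<theta> (\<theta> (inv g x)) = \<theta> (inv g x)"
      using fun_cong[OF i, of "inv g x"] by (simp add: subst_comp_def)
    finally show ?thesis by (simp add: conjs_def)
  qed
  then show "subst_comp (conjs g \<theta>) (conjs g \<theta>) = conjs g \<theta>" by blast
qed

lemma subst_dom_conj: "bij g \<Longrightarrow> subst_dom (conjs g \<theta>) = g ` subst_dom \<theta>"
proof -
  assume g: "bij g"
  have "x \<in> subst_dom (conjs g \<theta>) \<longleftrightarrow> inv g x \<in> subst_dom \<theta>" for x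
  proof -
    have v: "Var x = subst_trm (ren g) (Var (inv g x))" using g by (simp add: ren_def)
    have "conjs g \<theta> x = Var x \<longleftrightarrow> subst_trm (ren g) (\<theta> (inv g x)) = subst_trm (ren g) (Var (inv g x))"
      by (subst v) (simp add: conjs_def)
    then have "conjs g \<theta> x = Var x \<longleftrightarrow> \<theta> (inv g x) = Var (inv g x)"
      using ren_inj_trm[OF g, of "\<theta> (inv g x)" "Var (inv g x)"] by (simp only:)
    then show ?thesis by (simp add: subst_dom_def)
  qed
  moreover have "x \<in> g ` subst_dom \<theta> \<longleftrightarrow> inv g x \<in> subst_dom \<theta>" for x
  proof
    assume "x \<in> g ` subst_dom \<theta>"
    then obtain y where "y \<in> subst_dom \<theta>" "x = g y" by blast
    then show "inv g x \<in> subst_dom \<theta>" using g by simp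
  next
    assume "inv g x \<in> subst_dom \<theta>"
    then have "g (inv g x) \<in> g ` subst_dom \<theta>" by (rule imageI)
    then show "x \<in> g ` subst_dom \<theta>" using g by simp
  qed
  ultimately show ?thesis by blast
qed

lemma subst_range_vars_conj: "bij g \<Longrightarrow> subst_range_vars (conjs g \<theta>) = g ` subst_range_vars \<theta>"
proof -
  assume g: "bij g"
  have "subst_range_vars (conjs g \<theta>) = (\<Union>x\<in>g ` subst_dom \<theta>. vars_trm (conjs g \<theta> x))"
    using g by (simp add: subst_range_vars_def subst_dom_conj)
  also have "\<dots> = (\<Union>y\<in>subst_dom \<theta>. g ` vars_trm (\<theta> y))"
    using g by (simp add: conjs_def)
  finally show ?thesis by (simp add: subst_range_vars_def image_UN)
qed

lemma relevant_conj: "bij g \<Longrightarrow> relevant \<theta> a b \<Longrightarrow>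
  relevant (conjs g \<theta>) (subst_atom (ren g) a) (subst_atom (ren g) b)"
  unfolding relevant_def
  by (simp add: subst_dom_conj subst_range_vars_conj flip: image_Un) (rule image_mono, blast)


definition act :: "('v \<Rightarrow> 'v) \<Rightarrow> (rat \<Rightarrow> rat) \<Rightarrow> ('f, 'v) pstep \<Rightarrow> ('f, 'v) pstep" where
  "act g \<sigma> s = PStep (shift_goal \<sigma> (subst_goal (ren g) (st_src s))) (st_clause s)
     (subst_comp (st_ren s) (ren g)) (conjs g (st_mgu s)) (\<sigma> \<circ> st_shift s)
     (shift_goal \<sigma> (subst_goal (ren g) (st_tgt s)))"

lemma act_sel[simp]:
  "st_src (act g \<sigma> s) = shift_goal \<sigma> (subst_goal (ren g) (st_src s))"
  "st_clause (act g \<sigma> s) = st_clause s"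
  "st_ren (act g \<sigma> s) = subst_comp (st_ren s) (ren g)"
  "st_mgu (act g \<sigma> s) = conjs g (st_mgu s)"
  "st_shift (act g \<sigma> s) = \<sigma> \<circ> st_shift s"
  "st_tgt (act g \<sigma> s) = shift_goal \<sigma> (subst_goal (ren g) (st_tgt s))"
  by (simp_all add: act_def)

lemma apfst_apsnd: "apfst f (apsnd h a) = (f (fst a), h (snd a))"
  by (cases a) simp

lemma pgoal_split_map:
  assumes "pgoal_split G a F" "shifting \<sigma>"
  shows "pgoal_split (shift_goal \<sigma> (subst_goal lam G)) (subst_atom lam (fst a), \<sigma> (snd a))
           (shift_goal \<sigma> (subst_goal lam F))"
  unfolding pgoal_split_def
proof (intro conjI ballI)
  have G: "G = insert a F" using assms(1) by (simp add: pgoal_split_def)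
  show "shift_goal \<sigma> (subst_goal lam G) = insert (subst_atom lam (fst a), \<sigma> (snd a)) (shift_goal \<sigma> (subst_goal lam F))"
    by (simp add: G subst_goal_insert shift_goal_insert subst_patom_def)
next
  fix q assume "q \<in> shift_goal \<sigma> (subst_goal lam F)"
  then obtain b p where "(b, p) \<in> F" "snd q = \<sigma> p"
    by (auto simp: shift_goal_def subst_goal_def)
  moreover have "snd a < p" using assms(1) \<open>(b, p) \<in> F\<close> by (auto simp: pgoal_split_def)
  ultimately show "snd (subst_atom lam (fst a), \<sigma> (snd a)) < snd q"
    using assms(2) by (simp add: shifting_def strict_mono_less)
qed

lemma is_pgoal_map:
  assumes "is_pgoal G" "shifting \<sigma>"
  shows "is_pgoal (shift_goal \<sigma> (subst_goal lam G))"
proof -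
  have e: "shift_goal \<sigma> (subst_goal lam G) = (\<lambda>(b, p). (subst_atom lam b, \<sigma> p)) ` G"
    by (auto simp: shift_goal_def subst_goal_def image_image split_def)
  have "inj_on snd ((\<lambda>(b, p). (subst_atom lam b, \<sigma> p)) ` G)"
  proof (rule inj_onI)
    fix x y assume x: "x \<in> (\<lambda>(b, p). (subst_atom lam b, \<sigma> p)) ` G"
      and y: "y \<in> (\<lambda>(b, p). (subst_atom lam b, \<sigma> p)) ` G" and e: "snd x = snd y"
    from x obtain b1 p1 where 1: "(b1, p1) \<in> G" "x = (subst_atom lam b1, \<sigma> p1)" by auto
    from y obtain b2 p2 where 2: "(b2, p2) \<in> G" "y = (subst_atom lam b2, \<sigma> p2)" by auto
    have "p1 = p2" using e 1 2 shifting_inj[OF assms(2)] by (simp add: inj_eq)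
    have inj: "inj_on snd G" using assms(1) by (simp add: is_pgoal_def)
    have "(b1, p1) = (b2, p2)" using inj_onD[OF inj _ 1(1) 2(1)] \<open>p1 = p2\<close> by simp
    then show "x = y" using 1 2 by simp
  qed
  then show ?thesis using assms(1) e by (simp add: is_pgoal_def)
qed

lemma subst_clause_comp: "subst_clause (subst_comp \<xi> \<tau>) c = subst_clause \<tau> (subst_clause \<xi> c)"
  by (simp add: subst_clause_def subst_atom_comp subst_goal_comp)

lemma vars_clause_ren: "vars_clause (subst_clause (ren g) c) = g ` vars_clause c"
  by (simp add: vars_clause_def subst_clause_def image_Un)

lemma is_step_act:
  fixes s :: "('f, 'v) pstep"
  assumes g: "bij g" and sg: "shifting \<sigma>" and st: "is_step s"
  shows "is_step (act g \<sigma> s)"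
proof -
  obtain G c \<xi> \<theta> \<pi> T where s: "s = PStep G c \<xi> \<theta> \<pi> T" by (cases s)
  obtain h B where c: "c = (h, B)" by (cases c)
  from st obtain a F where
    base: "is_pgoal G" "is_clause c" "renaming \<xi>" "shifting \<pi>"
      "vars_goal G \<inter> vars_clause (subst_clause \<xi> c) = {}" and
    sp: "pgoal_split G a F" and th: "idempotent \<theta>" "is_mgu \<theta> (fst a) (subst_atom \<xi> h)"
      "relevant \<theta> (fst a) (subst_atom \<xi> h)" and
    pr: "prios F \<inter> prios (shift_goal \<pi> (subst_goal \<xi> B)) = {}" and
    T: "T = subst_goal \<theta> (F \<union> shift_goal \<pi> (subst_goal \<xi> B))"
    by (auto simp: is_step_def Let_def s c)
  define R where "R = (ren g :: ('f, 'v) subst)"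
  define a' where "a' = (subst_atom R (fst a), \<sigma> (snd a))"
  define F' where "F' = shift_goal \<sigma> (subst_goal R F)"
  have 1: "is_pgoal (shift_goal \<sigma> (subst_goal R G))" using is_pgoal_map[OF base(1) sg] .
  obtain hh where hh: "bij hh" "\<xi> = ren hh" using renaming_E[OF base(3)] by blast
  have 2: "renaming (subst_comp \<xi> R)"
    using hh g by (simp add: R_def subst_comp_ren renaming_ren bij_comp)
  have 3: "shifting (\<sigma> \<circ> \<pi>)" using sg base(4) by (rule shifting_comp)
  have 4: "vars_goal (shift_goal \<sigma> (subst_goal R G)) \<inter> vars_clause (subst_clause (subst_comp \<xi> R) c) = {}"
    using base(5) g by (simp add: R_def subst_clause_comp vars_clause_ren flip: image_Int[OF bij_is_inj[OF g]])
  have 5: "pgoal_split (shift_goal \<sigma> (subst_goal R G)) a' F'"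
    unfolding a'_def F'_def by (rule pgoal_split_map[OF sp sg])
  have 6: "idempotent (conjs g \<theta>)" using idempotent_conj[OF g th(1)] .
  have ha: "subst_atom (subst_comp \<xi> R) h = subst_atom R (subst_atom \<xi> h)"
    by (simp add: subst_atom_comp)
  have 7: "is_mgu (conjs g \<theta>) (fst a') (subst_atom (subst_comp \<xi> R) h)"
    using is_mgu_conj[OF g th(2)] by (simp add: a'_def R_def subst_atom_comp)
  have 8: "relevant (conjs g \<theta>) (fst a') (subst_atom (subst_comp \<xi> R) h)"
    using relevant_conj[OF g th(3)] by (simp add: a'_def R_def subst_atom_comp)
  have sB: "shift_goal (\<sigma> \<circ> \<pi>) (subst_goal (subst_comp \<xi> R) B) = shift_goal \<sigma> (subst_goal R (shift_goal \<pi> (subst_goal \<xi> B)))"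
    by (simp add: shift_goal_comp[symmetric] subst_goal_comp[symmetric] shift_subst_comm)
  have 9: "prios F' \<inter> prios (shift_goal (\<sigma> \<circ> \<pi>) (subst_goal (subst_comp \<xi> R) B)) = {}"
    unfolding sB F'_def using pr shifting_inj[OF sg]
    by (simp flip: image_Int)
  have 10: "shift_goal \<sigma> (subst_goal R T) =
      subst_goal (conjs g \<theta>) (F' \<union> shift_goal (\<sigma> \<circ> \<pi>) (subst_goal (subst_comp \<xi> R) B))"
  proof -
    have "F' \<union> shift_goal (\<sigma> \<circ> \<pi>) (subst_goal (subst_comp \<xi> R) B)
        = shift_goal \<sigma> (subst_goal R (F \<union> shift_goal \<pi> (subst_goal \<xi> B)))"
      unfolding sB F'_def by (simp add: shift_goal_Un subst_goal_Un)
    then show ?thesis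
      by (simp add: T shift_subst_comm R_def conj_goal[OF g])
  qed
  note facts = 1 2 3 4 5 6 7 8 9 10 base(2)[unfolded c]
  show ?thesis
    unfolding is_step_def Let_def act_def s c pstep.sel fst_conv snd_conv R_def[symmetric]
    apply (intro conjI exI[where x=a'] exI[where x=F'])
    using facts[unfolded c] by simp_all
qed


lemma step_split:
  assumes "is_step s"
  obtains a F where "pgoal_split (st_src s) a F"
  using assms by (auto simp: is_step_def Let_def)

lemma congr_act1:
  assumes g: "bij g" and sg: "shifting \<sigma>" and st: "is_step s"
  shows "congruent_lowering (act g \<sigma> s) s"
proof -
  obtain a F where sp: "pgoal_split (st_src s) a F" using step_split[OF st] .
  have "lowering_wit {} a F (ren g) \<sigma> (act g \<sigma> s) s"
    unfolding lowering_wit_def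
    using st is_step_act[OF g sg st] sg sp pgoal_split_map[OF sp sg, of "ren g"]
    by (simp add: apfst_apsnd)
  moreover have "shift_goal \<sigma> (shift_goal (st_shift s) (snd (st_clause s)))
      = shift_goal (st_shift (act g \<sigma> s)) (snd (st_clause s))"
    by (simp add: shift_goal_comp)
  ultimately show ?thesis unfolding congruent_lowering_def using sg by blast
qed

lemma shift_map_inv:
  assumes g: "bij g" and sg: "shifting \<sigma>"
  shows "shift_goal (inv \<sigma>) (subst_goal (ren (inv g)) (shift_goal \<sigma> (subst_goal (ren g) G))) = G"
proof -
  have "shift_goal (inv \<sigma>) (subst_goal (ren (inv g)) (shift_goal \<sigma> (subst_goal (ren g) G)))
     = shift_goal (inv \<sigma>) (shift_goal \<sigma> (subst_goal (ren (inv g)) (subst_goal (ren g) G)))"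
    by (simp add: shift_subst_comm)
  also have "\<dots> = G" using g sg by (simp add: shift_inv_goal ren_inv_goal)
  finally show ?thesis .
qed

lemma congr_act2:
  assumes g: "bij g" and sg: "shifting \<sigma>" and st: "is_step s"
  shows "congruent_lowering s (act g \<sigma> s)"
proof -
  obtain a F where sp: "pgoal_split (st_src s) a F" using step_split[OF st] .
  define a' where "a' = (subst_atom (ren g) (fst a), \<sigma> (snd a))"
  define F' where "F' = shift_goal \<sigma> (subst_goal (ren g) F)"
  have sp': "pgoal_split (st_src (act g \<sigma> s)) a' F'"
    unfolding a'_def F'_def using pgoal_split_map[OF sp sg] by simp
  have sgi: "shifting (inv \<sigma>)" using shifting_inv[OF sg] .
  have gi: "bij (inv g)" using bij_imp_bij_inv[OF g] .
  have sp2: "pgoal_split (st_src s) (apfst (subst_atom (ren (inv g))) (apsnd (inv \<sigma>) a'))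
      (shift_goal (inv \<sigma>) (subst_goal (ren (inv g)) F') \<union> {})"
  proof -
    have "pgoal_split (shift_goal (inv \<sigma>) (subst_goal (ren (inv g)) (st_src (act g \<sigma> s))))
       (subst_atom (ren (inv g)) (fst a'), inv \<sigma> (snd a')) (shift_goal (inv \<sigma>) (subst_goal (ren (inv g)) F'))"
      by (rule pgoal_split_map[OF sp' sgi])
    moreover have "shift_goal (inv \<sigma>) (subst_goal (ren (inv g)) (st_src (act g \<sigma> s))) = st_src s"
      using shift_map_inv[OF g sg] by simp
    ultimately show ?thesis by (simp add: apfst_apsnd)
  qed
  have "lowering_wit {} a' F' (ren (inv g)) (inv \<sigma>) s (act g \<sigma> s)"
    unfolding lowering_wit_def
    using st is_step_act[OF g sg st] sgi sp' sp2 by simp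
  moreover have "shift_goal (inv \<sigma>) (shift_goal (st_shift (act g \<sigma> s)) (snd (st_clause (act g \<sigma> s))))
      = shift_goal (st_shift s) (snd (st_clause (act g \<sigma> s)))"
    using sg by (simp add: shift_goal_comp o_def)
  ultimately show ?thesis unfolding congruent_lowering_def using sgi by blast
qed

lemma act_in_S:
  assumes S: "scheduling_rule S" and s: "s \<in> S" and g: "bij g" and sg: "shifting \<sigma>"
  shows "act g \<sigma> s \<in> S" "is_step (act g \<sigma> s)"
proof -
  have st: "is_step s" using S s by (simp add: scheduling_rule_def)
  have "mutual_congruent_lowering (act g \<sigma> s) s"
    using congr_act1[OF g sg st] congr_act2[OF g sg st] by (simp add: mutual_congruent_lowering_def)
  then show "act g \<sigma> s \<in> S" using S s by (simp add: scheduling_rule_def complete_steps_def)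
  show "is_step (act g \<sigma> s)" using is_step_act[OF g sg st] .
qed


definition var_rel :: "('f, 'v) pgoal \<Rightarrow> ('f, 'v) pgoal \<Rightarrow> bool" where
  "var_rel A B \<longleftrightarrow> (\<exists>f \<sigma>. bij f \<and> shifting \<sigma> \<and> B = shift_goal \<sigma> (subst_goal (ren f) A))"

lemma var_rel_refl: "var_rel A A"
  unfolding var_rel_def
  by (rule exI[of _ id], rule exI[of _ id]) (simp add: shifting_id ren_id)

lemma var_rel_sym: "var_rel A B \<Longrightarrow> var_rel B A"
  unfolding var_rel_def
proof (elim exE conjE)
  fix f \<sigma> assume f: "bij f" and s: "shifting \<sigma>" and B: "B = shift_goal \<sigma> (subst_goal (ren f) A)"
  have "A = shift_goal (inv \<sigma>) (subst_goal (ren (inv f)) B)" using shift_map_inv[OF f s, of A] B by simp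
  then show "\<exists>f \<sigma>. bij f \<and> shifting \<sigma> \<and> A = shift_goal \<sigma> (subst_goal (ren f) B)"
    using bij_imp_bij_inv[OF f] shifting_inv[OF s] by blast
qed

lemma var_rel_trans: "var_rel A B \<Longrightarrow> var_rel B C \<Longrightarrow> var_rel A C"
  unfolding var_rel_def
proof (elim exE conjE)
  fix f \<sigma> f2 \<sigma>2 assume f: "bij f" and s: "shifting \<sigma>" and B: "B = shift_goal \<sigma> (subst_goal (ren f) A)"
    and f2: "bij f2" and s2: "shifting \<sigma>2" and C: "C = shift_goal \<sigma>2 (subst_goal (ren f2) B)"
  have "C = shift_goal (\<sigma>2 \<circ> \<sigma>) (subst_goal (ren (f2 \<circ> f)) A)"
    by (simp add: B C shift_subst_comm shift_goal_comp subst_goal_comp subst_comp_ren)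
  then show "\<exists>f \<sigma>. bij f \<and> shifting \<sigma> \<and> C = shift_goal \<sigma> (subst_goal (ren f) A)"
    using bij_comp[OF f f2] shifting_comp[OF s2 s] by blast
qed

lemma var_rel_card: "var_rel A B \<Longrightarrow> card B = card A"
  unfolding var_rel_def
proof (elim exE conjE)
  fix f \<sigma> assume f: "bij f" and s: "shifting \<sigma>" and B: "B = shift_goal \<sigma> (subst_goal (ren f) A)"
  have e: "B = (\<lambda>(b, p). (subst_atom (ren f) b, \<sigma> p)) ` A"
    unfolding B by (auto simp: shift_goal_def subst_goal_def image_image split_def)
  have "inj (\<lambda>(b, p). (subst_atom (ren f) b, \<sigma> p))"
  proof (rule injI)
    fix x y
    assume e: "(\<lambda>(b, p). (subst_atom (ren f) b, \<sigma> p)) x = (\<lambda>(b, p). (subst_atom (ren f) b, \<sigma> p)) y"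
    obtain b1 p1 b2 p2 where xy: "x = (b1, p1)" "y = (b2, p2)" by fastforce
    have e1: "subst_atom (ren f) b1 = subst_atom (ren f) b2" and e2: "\<sigma> p1 = \<sigma> p2" using e xy by simp_all
    have "b1 = b2" using e1 ren_inj_atom[OF f, of b1 b2] by (simp only:)
    moreover have "p1 = p2" using e2 shifting_inj[OF s] by (simp add: inj_eq)
    ultimately show "x = y" using xy by simp
  qed
  then have "inj_on (\<lambda>(b, p). (subst_atom (ren f) b, \<sigma> p)) A" by (rule inj_on_subset) simp
  then show "card B = card A" using e by (simp add: card_image)
qed

lemma pgoal_split_unique:
  assumes "pgoal_split G a F" "pgoal_split G a' F'"
  shows "a' = a \<and> F' = F"
proof -
  have aF: "a \<notin> F" using assms(1) by (auto simp: pgoal_split_def)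
  have aF': "a' \<notin> F'" using assms(2) by (auto simp: pgoal_split_def)
  have "a = a'"
  proof (rule ccontr)
    assume ne: "a \<noteq> a'"
    have "a \<in> F'" using assms ne by (auto simp: pgoal_split_def)
    then have 1: "snd a' < snd a" using assms(2) by (auto simp: pgoal_split_def)
    have "a' \<in> F" using assms ne by (auto simp: pgoal_split_def)
    then have 2: "snd a < snd a'" using assms(1) by (auto simp: pgoal_split_def)
    from 1 2 show False by simp
  qed
  moreover have "F = G - {a}" using assms(1) aF by (auto simp: pgoal_split_def)
  moreover have "F' = G - {a'}" using assms(2) aF' by (auto simp: pgoal_split_def)
  ultimately show ?thesis by simp
qed

lemma subst_atom_Var_fun: "subst_atom Var = id"
  by (rule ext) simp

lemma same_src_lowering:
  assumes "is_step s1" "is_step s2" "st_src s1 = st_src s2" "st_clause s1 = st_clause s2"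
  shows "lowering s2 s1"
proof -
  obtain a F where sp: "pgoal_split (st_src s1) a F" using step_split[OF assms(1)] .
  have "lowering_wit {} a F Var id s2 s1"
    unfolding lowering_wit_def using assms sp shifting_id
    by (simp add: apfst_apsnd subst_atom_Var_fun)
  then show ?thesis unfolding lowering_def lowering_by_def by blast
qed

lemma inverse_subst_ren:
  assumes "\<forall>y\<in>V. subst_trm \<delta>2 (\<delta>1 y) = Var y" "finite V"
  shows "\<exists>g. bij g \<and> (\<forall>y\<in>V. \<delta>1 y = Var (g y))"
proof -
  have isv: "\<exists>z. \<delta>1 y = Var z" if "y \<in> V" for y
  proof (cases "\<delta>1 y")
    case (Var z) then show ?thesis by simp
  next
    case (Fn f ts) then show ?thesis using assms(1) that by auto
  qed
  define k where "k y = (case \<delta>1 y of Var z \<Rightarrow> z | Fn f ts \<Rightarrow> y)" for y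
  have kk: "\<delta>1 y = Var (k y)" if "y \<in> V" for y using isv[OF that] by (auto simp: k_def)
  have "inj_on k V"
  proof (rule inj_onI)
    fix x y assume xy: "x \<in> V" "y \<in> V" "k x = k y"
    have "Var x = subst_trm \<delta>2 (\<delta>1 x)" using assms(1) xy(1) by simp
    also have "\<dots> = subst_trm \<delta>2 (Var (k x))" using kk[OF xy(1)] by simp
    also have "\<dots> = subst_trm \<delta>2 (\<delta>1 y)" using kk[OF xy(2)] xy(3) by simp
    also have "\<dots> = Var y" using assms(1) xy(2) by simp
    finally show "x = y" by simp
  qed
  then obtain g where "bij g" "\<forall>y\<in>V. g y = k y" using extend_inj_bij[OF assms(2)] by blast
  then show ?thesis using kk by auto
qed


lemma prios_insert: "prios (insert a A) = insert (snd a) (prios A)"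
  by (simp add: prios_def)

lemma uniq0:
  fixes s1 s2 :: "('f, 'v) pstep"
  assumes S: "scheduling_rule S" and s1S: "s1 \<in> S" and s2S: "s2 \<in> S"
    and src: "st_src s1 = st_src s2" and cl: "st_clause s1 = st_clause s2"
    and rh: "subst_atom (st_ren s1) (fst (st_clause s1)) = subst_atom (st_ren s2) (fst (st_clause s1))"
    and rb: "subst_goal (st_ren s1) (snd (st_clause s1)) = subst_goal (st_ren s2) (snd (st_clause s1))"
  shows "var_rel (st_tgt s1) (st_tgt s2)"
proof -
  have st1: "is_step s1" and st2: "is_step s2" using S s1S s2S by (auto simp: scheduling_rule_def)
  obtain G c \<xi>1 \<theta>1 \<pi>1 T1 where s1: "s1 = PStep G c \<xi>1 \<theta>1 \<pi>1 T1" by (cases s1)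
  obtain G2 c2 \<xi>2 \<theta>2 \<pi>2 T2 where s2: "s2 = PStep G2 c2 \<xi>2 \<theta>2 \<pi>2 T2" by (cases s2)
  have G2: "G2 = G" and c2: "c2 = c" using src cl s1 s2 by simp_all
  obtain h B where c: "c = (h, B)" by (cases c)
  have rh': "subst_atom \<xi>1 h = subst_atom \<xi>2 h" using rh s1 s2 c by simp
  have rb': "subst_goal \<xi>1 B = subst_goal \<xi>2 B" using rb s1 s2 c by simp
  from st1 obtain a F where
    pg: "is_pgoal G" and cc: "is_clause c" and sp1: "pgoal_split G a F" and
    m1: "is_mgu \<theta>1 (fst a) (subst_atom \<xi>1 h)" and
    T1: "T1 = subst_goal \<theta>1 (F \<union> shift_goal \<pi>1 (subst_goal \<xi>1 B))"
    by (auto simp: is_step_def Let_def s1 c)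
  from st2 obtain a2 F2 where sp2: "pgoal_split G a2 F2" and
    m2: "is_mgu \<theta>2 (fst a2) (subst_atom \<xi>2 h)" and
    T2: "T2 = subst_goal \<theta>2 (F2 \<union> shift_goal \<pi>2 (subst_goal \<xi>2 B))"
    by (auto simp: is_step_def Let_def s2 c G2 c2)
  have a2: "a2 = a" and F2: "F2 = F" using pgoal_split_unique[OF sp1 sp2] by simp_all
  define BB where "BB = subst_goal \<xi>1 B"
  have m2': "is_mgu \<theta>2 (fst a) (subst_atom \<xi>1 h)" using m2 a2 rh' by simp
  obtain \<delta>1 where d1: "\<theta>2 = subst_comp \<theta>1 \<delta>1"
    using m1 m2' by (auto simp: is_mgu_def)
  obtain \<delta>2 where d2: "\<theta>1 = subst_comp \<theta>2 \<delta>2"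
    using m1 m2' by (auto simp: is_mgu_def)
  have "mutual_lowering s1 s2"
    unfolding mutual_lowering_def using same_src_lowering st1 st2 src cl by metis
  then have "mutual_congruent_lowering s1 s2"
    using S s1S s2S by (simp add: scheduling_rule_def deterministic_def)
  then have "congruent_lowering s2 s1" by (simp add: mutual_congruent_lowering_def)
  then obtain X a' K lam \<sigma>w \<rho> where lw: "lowering_wit X a' K lam \<sigma>w s2 s1" and
    sr: "shifting \<rho>" and rK: "shift_goal \<rho> K = shift_goal \<sigma>w K" and
    rB: "shift_goal \<rho> (shift_goal \<pi>1 B) = shift_goal \<pi>2 B"
    unfolding congruent_lowering_def by (auto simp: s1 s2 c)
  have spK: "pgoal_split G a' K" and ssw: "shifting \<sigma>w" and
    spw: "pgoal_split G (apfst (subst_atom lam) (apsnd \<sigma>w a')) (shift_goal \<sigma>w (subst_goal lam K) \<union> X)"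
    using lw by (auto simp: lowering_wit_def s1 s2 G2)
  have a': "a' = a" and K: "K = F" using pgoal_split_unique[OF sp1 spK] by simp_all
  have pG1: "prios G = insert (snd a) (prios F)"
    using sp1 by (simp add: pgoal_split_def prios_insert)
  have pG2: "prios G = insert (\<sigma>w (snd a)) (\<sigma>w ` prios F \<union> prios X)"
    using spw a' K by (simp add: pgoal_split_def prios_insert apfst_apsnd)
  have sub: "\<sigma>w ` prios G \<subseteq> prios G" using pG1 pG2 by auto
  have finG: "finite (prios G)" using pg by (simp add: is_pgoal_def prios_def)
  have "card (\<sigma>w ` prios G) = card (prios G)"
    using shifting_inj[OF ssw] by (simp add: card_image inj_on_subset)
  then have eqG: "\<sigma>w ` prios G = prios G" using card_subset_eq[OF finG sub] by simp
  have fixG: "\<forall>p\<in>prios G. \<sigma>w p = p"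
    using strict_mono_fix_finite[OF _ finG eqG] ssw by (simp add: shifting_def)
  have "shift_goal \<sigma>w F = shift_goal id F"
    by (rule shift_goal_cong) (use fixG pG1 in auto)
  then have rF: "shift_goal \<rho> F = F" using rK K by simp
  have rBB: "shift_goal \<pi>2 BB = shift_goal \<rho> (shift_goal \<pi>1 BB)"
    unfolding BB_def by (simp add: shift_subst_comm rB)
  define Q1 where "Q1 = F \<union> shift_goal \<pi>1 BB"
  have T1': "T1 = subst_goal \<theta>1 Q1" using T1 by (simp add: Q1_def BB_def)
  have "T2 = subst_goal \<theta>2 (shift_goal \<rho> Q1)"
    using T2 F2 rb' rBB rF by (simp add: Q1_def BB_def shift_goal_Un)
  also have "\<dots> = shift_goal \<rho> (subst_goal \<delta>1 T1)"
    by (simp add: T1' d1 shift_subst_comm subst_goal_comp)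
  finally have T2': "T2 = shift_goal \<rho> (subst_goal \<delta>1 T1)" .
  \<comment> \<open>\<delta>1 is a renaming on the variables of T1\<close>
  have finQ: "finite Q1"
  proof -
    have "finite G" using pg by (simp add: is_pgoal_def)
    moreover have "F \<subseteq> G" using sp1 by (auto simp: pgoal_split_def)
    moreover have "finite B" using cc c by (simp add: is_clause_def is_pgoal_def)
    ultimately show ?thesis by (simp add: Q1_def BB_def finite_subset)
  qed
  have finV: "finite (vars_goal T1)" using finQ T1' by simp
  have inv: "\<forall>y\<in>vars_goal T1. subst_trm \<delta>2 (\<delta>1 y) = Var y"
  proof
    fix y assume "y \<in> vars_goal T1"
    then obtain x where y: "y \<in> vars_trm (\<theta>1 x)" using T1' by (auto simp: vars_goal_subst)
    have "subst_trm (subst_comp \<delta>1 \<delta>2) (\<theta>1 x) = \<theta>1 x"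
    proof -
      have "\<theta>1 x = subst_trm \<delta>2 (\<theta>2 x)" using d2 by (simp add: subst_comp_def)
      also have "\<dots> = subst_trm \<delta>2 (subst_trm \<delta>1 (\<theta>1 x))" using d1 by (simp add: subst_comp_def)
      finally show ?thesis by (simp add: subst_trm_comp)
    qed
    then have "subst_comp \<delta>1 \<delta>2 y = Var y" using y by (rule subst_trm_fix)
    then show "subst_trm \<delta>2 (\<delta>1 y) = Var y" by (simp add: subst_comp_def)
  qed
  obtain g where g: "bij g" "\<forall>y\<in>vars_goal T1. \<delta>1 y = Var (g y)"
    using inverse_subst_ren[OF inv finV] by blast
  have "subst_goal \<delta>1 T1 = subst_goal (ren g) T1"
    by (rule subst_goal_cong) (simp add: g(2) ren_def)
  then have "T2 = shift_goal \<rho> (subst_goal (ren g) T1)" using T2' by simp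
  then show ?thesis unfolding var_rel_def s1 s2 using g(1) sr by auto
qed


lemma step_facts:
  assumes "is_step s"
  shows "is_pgoal (st_src s)" "is_clause (st_clause s)" "renaming (st_ren s)" "shifting (st_shift s)"
    "vars_goal (st_src s) \<inter> vars_clause (subst_clause (st_ren s) (st_clause s)) = {}"
  using assms by (auto simp: is_step_def Let_def)

lemma finite_vars_clause: "is_clause c \<Longrightarrow> finite (vars_clause c)"
  by (simp add: is_clause_def is_pgoal_def vars_clause_def)

lemma var_rel_act: "bij g \<Longrightarrow> shifting \<sigma> \<Longrightarrow> var_rel A (shift_goal \<sigma> (subst_goal (ren g) A))"
  unfolding var_rel_def by blast

lemma uniq:
  fixes s1 s2 :: "('f, 'v) pstep"
  assumes S: "scheduling_rule S" and s1S: "s1 \<in> S" and s2S: "s2 \<in> S"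
    and cl: "st_clause s1 = st_clause s2" and vr: "var_rel (st_src s1) (st_src s2)"
  shows "var_rel (st_tgt s1) (st_tgt s2)"
proof -
  obtain f \<sigma> where f: "bij f" and sg: "shifting \<sigma>" and
    src2: "st_src s2 = shift_goal \<sigma> (subst_goal (ren f) (st_src s1))"
    using vr unfolding var_rel_def by blast
  define s1' where "s1' = act f \<sigma> s1"
  have s1'S: "s1' \<in> S" and st1': "is_step s1'" using act_in_S[OF S s1S f sg] by (simp_all add: s1'_def)
  have st2: "is_step s2" using S s2S by (simp add: scheduling_rule_def)
  have r1: "var_rel (st_tgt s1) (st_tgt s1')" unfolding s1'_def using var_rel_act[OF f sg] by simp
  have src1': "st_src s1' = st_src s2" using src2 by (simp add: s1'_def)
  have cl1': "st_clause s1' = st_clause s2" using cl by (simp add: s1'_def)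
  define G where "G = st_src s2"
  define c where "c = st_clause s2"
  obtain h1 where h1: "bij h1" "st_ren s1' = ren h1" using renaming_E step_facts(3)[OF st1'] by blast
  obtain h2 where h2: "bij h2" "st_ren s2 = ren h2" using renaming_E step_facts(3)[OF st2] by blast
  define VC where "VC = vars_clause c"
  have finVC: "finite VC" using step_facts(2)[OF st2] by (simp add: VC_def c_def finite_vars_clause)
  have finG: "finite (vars_goal G)" using step_facts(1)[OF st2] by (simp add: G_def is_pgoal_def)
  have dis1: "vars_goal G \<inter> h1 ` VC = {}"
    using step_facts(5)[OF st1'] src1' cl1' h1(2) by (simp add: G_def VC_def c_def vars_clause_ren)
  have dis2: "vars_goal G \<inter> h2 ` VC = {}"
    using step_facts(5)[OF st2] h2(2) by (simp add: G_def VC_def c_def vars_clause_ren)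
  define k where "k x = (if x \<in> vars_goal G then x else h2 (inv h1 x))" for x
  have "inj_on k (vars_goal G \<union> h1 ` VC)"
  proof (rule inj_onI)
    fix x y assume x: "x \<in> vars_goal G \<union> h1 ` VC" and y: "y \<in> vars_goal G \<union> h1 ` VC" and e: "k x = k y"
    have oth: "k z \<notin> vars_goal G" if zz: "z \<in> h1 ` VC" for z
    proof -
      have "z \<notin> vars_goal G" using zz dis1 by blast
      moreover obtain w where "w \<in> VC" "z = h1 w" using zz by blast
      ultimately have "k z = h2 w" using h1(1) by (simp add: k_def)
      then show ?thesis using \<open>w \<in> VC\<close> dis2 by blast
    qed
    show "x = y"
    proof (cases "x \<in> vars_goal G")
      case xG: True
      show ?thesis
      proof (cases "y \<in> vars_goal G")
        case True then show ?thesis using xG e by (simp add: k_def)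
      next
        case False then have "y \<in> h1 ` VC" using y by blast
        then have "k y \<notin> vars_goal G" by (rule oth)
        moreover have "k x \<in> vars_goal G" using xG by (simp add: k_def)
        ultimately show ?thesis using e by simp
      qed
    next
      case xG: False
      then have xh: "x \<in> h1 ` VC" using x by blast
      show ?thesis
      proof (cases "y \<in> vars_goal G")
        case True
        then have "k y \<in> vars_goal G" by (simp add: k_def)
        moreover have "k x \<notin> vars_goal G" using xh by (rule oth)
        ultimately show ?thesis using e by simp
      next
        case False
        then have "h2 (inv h1 x) = h2 (inv h1 y)" using xG e by (simp add: k_def)
        then have "inv h1 x = inv h1 y" using h2(1) by (simp add: bij_is_inj inj_eq)
        then show ?thesis using h1(1) by (metis bij_inv_r)
      qed
    qed
  qed
  then obtain g where g: "bij g" "\<forall>x\<in>vars_goal G \<union> h1 ` VC. g x = k x"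
    using extend_inj_bij[of "vars_goal G \<union> h1 ` VC" k] finVC finG by blast
  define s1'' where "s1'' = act g id s1'"
  have s1''S: "s1'' \<in> S" using act_in_S[OF S s1'S g(1) shifting_id] by (simp add: s1''_def)
  have r2: "var_rel (st_tgt s1') (st_tgt s1'')" unfolding s1''_def using var_rel_act[OF g(1) shifting_id] by simp
  have gG: "subst_goal (ren g) G = G"
  proof -
    have "subst_goal (ren g) G = subst_goal Var G"
      by (rule subst_goal_cong) (use g(2) in \<open>simp add: ren_def k_def\<close>)
    then show ?thesis by simp
  qed
  have src'': "st_src s1'' = st_src s2" using src1' gG by (simp add: s1''_def G_def)
  have cl'': "st_clause s1'' = st_clause s2" using cl1' by (simp add: s1''_def)
  have ren'': "st_ren s1'' = ren (g \<circ> h1)" using h1(2) by (simp add: s1''_def subst_comp_ren)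
  have gh: "g (h1 x) = h2 x" if "x \<in> VC" for x
  proof -
    have "h1 x \<notin> vars_goal G" using dis1 that by blast
    then show ?thesis using g(2) that h1(1) by (simp add: k_def)
  qed
  obtain hh B where c: "c = (hh, B)" by (cases c)
  have "subst_atom (st_ren s1'') hh = subst_atom (st_ren s2) hh"
    unfolding ren'' h2(2)
    by (rule subst_atom_cong) (simp add: ren_def gh VC_def c vars_clause_def)
  moreover have "subst_goal (st_ren s1'') B = subst_goal (st_ren s2) B"
    unfolding ren'' h2(2)
    by (rule subst_goal_cong) (simp add: ren_def gh VC_def c vars_clause_def)
  ultimately have r3: "var_rel (st_tgt s1'') (st_tgt s2)"
    using uniq0[OF S s1''S s2S src'' cl''] cl'' by (simp add: c_def[symmetric] c)
  show ?thesis using var_rel_trans[OF r1 var_rel_trans[OF r2 r3]] .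
qed


lemma goal_at_upd: "k \<le> n \<Longrightarrow> goal_at G0 (d(n := x)) k = goal_at G0 d k"
  by (induction k) auto

lemma pSLD_mono: "pSLD P S G0 n d \<Longrightarrow> m \<le> n \<Longrightarrow> pSLD P S G0 m d"
  unfolding pSLD_def using order.strict_trans2 by blast

lemma finite_vars_renamed: "is_clause c \<Longrightarrow> finite (vars_clause (subst_clause \<xi> c))"
  by (cases c) (simp add: is_clause_def is_pgoal_def vars_clause_def subst_clause_def)

lemma ext1:
  fixes d :: "nat \<Rightarrow> ('f, 'v) pstep"
  assumes inf: "infinite (UNIV :: 'v set)" and S: "scheduling_rule S" and G0: "is_pgoal G0"
    and d: "pSLD P S G0 (enat n) d" and sS: "s \<in> S" and sP: "st_clause s \<in> P"
    and vr: "var_rel (goal_at G0 d n) (st_src s)"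
  shows "\<exists>s'. pSLD P S G0 (enat (Suc n)) (d(n := s')) \<and> st_clause s' = st_clause s \<and>
             var_rel (st_tgt s) (st_tgt s')"
proof -
  define Gn where "Gn = goal_at G0 d n"
  obtain f0 \<sigma>0 where f0: "bij f0" and s0: "shifting \<sigma>0" and
    srcs: "st_src s = shift_goal \<sigma>0 (subst_goal (ren f0) Gn)"
    using vr unfolding var_rel_def Gn_def by blast
  have st: "is_step s" using S sS by (simp add: scheduling_rule_def)
  define A where "A = vars_goal (st_src s)"
  define Bv where "Bv = vars_clause (renamed_clause s)"
  define Y where "Y = vars_goal G0 \<union> (\<Union>i<n. vars_clause (renamed_clause (d i)))"
  have finA: "finite A" using step_facts(1)[OF st] by (simp add: A_def is_pgoal_def)
  have finB: "finite Bv" using step_facts(2)[OF st] by (simp add: Bv_def renamed_clause_def finite_vars_renamed)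
  have finY: "finite Y"
  proof -
    have "finite (vars_clause (renamed_clause (d i)))" if "i < n" for i
    proof -
      have sti: "is_step (d i)" using d that by (simp add: pSLD_def)
      show ?thesis using finite_vars_renamed[OF step_facts(2)[OF sti]] by (simp add: renamed_clause_def)
    qed
    then show ?thesis using G0 by (simp add: Y_def is_pgoal_def)
  qed
  have AB: "A \<inter> Bv = {}" using step_facts(5)[OF st] by (simp add: A_def Bv_def renamed_clause_def)
  have "inj (inv f0)" using bij_imp_bij_inv[OF f0] by (rule bij_is_inj)
  then have "inj_on (inv f0) A" by (rule inj_on_subset) simp
  then obtain g where g: "bij g" "\<forall>x\<in>A. g x = inv f0 x" "g ` Bv \<inter> Y = {}"
    using extend_inj_bij_fresh[OF inf finA finB AB _ finY] by blast
  define s' where "s' = act g (inv \<sigma>0) s"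
  have si: "shifting (inv \<sigma>0)" using shifting_inv[OF s0] .
  have s'S: "s' \<in> S" and st': "is_step s'" using act_in_S[OF S sS g(1) si] by (simp_all add: s'_def)
  have "st_src s' = subst_goal (ren g) (subst_goal (ren f0) Gn)"
    by (simp add: s'_def srcs shift_subst_comm shift_inv_goal[OF s0])
  also have "\<dots> = subst_goal (ren (g \<circ> f0)) Gn" by (simp add: subst_goal_comp subst_comp_ren)
  also have "\<dots> = subst_goal Var Gn"
  proof (rule subst_goal_cong)
    fix x assume "x \<in> vars_goal Gn"
    then have "f0 x \<in> A" by (simp add: A_def srcs)
    then show "ren (g \<circ> f0) x = Var x" using g(2) f0 by (simp add: ren_def)
  qed
  finally have src': "st_src s' = Gn" by simp
  have rc': "vars_clause (renamed_clause s') = g ` Bv"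
    by (simp add: s'_def renamed_clause_def Bv_def subst_clause_comp vars_clause_ren)
  have "pSLD P S G0 (enat (Suc n)) (d(n := s'))"
    unfolding pSLD_def
  proof (intro allI impI)
    fix j assume "enat j < enat (Suc n)"
    then have j: "j \<le> n" by simp
    have ga: "goal_at G0 (d(n := s')) j = goal_at G0 d j" using goal_at_upd[OF j] .
    have un: "(\<Union>i<j. vars_clause (renamed_clause ((d(n := s')) i))) = (\<Union>i<j. vars_clause (renamed_clause (d i)))"
      using j by auto
    show "is_step ((d(n := s')) j) \<and> (d(n := s')) j \<in> S \<and> st_clause ((d(n := s')) j) \<in> P \<and>
          st_src ((d(n := s')) j) = goal_at G0 (d(n := s')) j \<and>
          vars_clause (renamed_clause ((d(n := s')) j)) \<inter>
          (vars_goal G0 \<union> (\<Union>i<j. vars_clause (renamed_clause ((d(n := s')) i)))) = {}"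
    proof (cases "j = n")
      case True
      have "vars_clause (renamed_clause s') \<inter> Y = {}" using rc' g(3) by simp
      then show ?thesis using True ga un st' s'S sP src' by (simp add: s'_def Y_def Gn_def)
    next
      case False
      then have "j < n" using j by simp
      then have "enat j < enat n" by simp
      then show ?thesis using d False ga un unfolding pSLD_def by simp
    qed
  qed
  moreover have "var_rel (st_tgt s) (st_tgt s')"
    unfolding s'_def using var_rel_act[OF g(1) si] by simp
  ultimately show ?thesis by (auto simp: s'_def)
qed


lemma sameclauses:
  assumes S: "scheduling_rule S" and d1: "pSLD P S G0 (enat n1) d1" and d2: "pSLD P S G0 (enat n2) d2"
  shows "k \<le> n1 \<Longrightarrow> k \<le> n2 \<Longrightarrow> (\<forall>i<k. st_clause (d1 i) = st_clause (d2 i)) \<Longrightarrow>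
         var_rel (goal_at G0 d1 k) (goal_at G0 d2 k)"
proof (induction k)
  case 0 then show ?case by (simp add: var_rel_refl)
next
  case (Suc k)
  have IH: "var_rel (goal_at G0 d1 k) (goal_at G0 d2 k)" using Suc by simp
  have "enat k < enat n1" "enat k < enat n2" using Suc.prems by simp_all
  then have 1: "d1 k \<in> S" "st_src (d1 k) = goal_at G0 d1 k" and 2: "d2 k \<in> S" "st_src (d2 k) = goal_at G0 d2 k"
    using d1 d2 unfolding pSLD_def by blast+
  have "st_clause (d1 k) = st_clause (d2 k)" using Suc.prems by simp
  then show ?case using uniq[OF S 1(1) 2(1)] IH 1(2) 2(2) by simp
qed

lemma reduction:
  fixes d :: "nat \<Rightarrow> ('f, 'v) pstep"
  assumes inf: "infinite (UNIV :: 'v set)" and S: "scheduling_rule S" and G0: "is_pgoal G0"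
    and d: "pSLD P S G0 (enat m) d" and ij: "i < j" "j \<le> m"
    and vr: "var_rel (goal_at G0 d i) (goal_at G0 d j)"
  shows "\<exists>d'. pSLD P S G0 (enat (i + (m - j))) d' \<and> card (goal_at G0 d' (i + (m - j))) = card (goal_at G0 d m)"
proof -
  have claim: "t \<le> m - j \<Longrightarrow> \<exists>e. pSLD P S G0 (enat (i + t)) e \<and> var_rel (goal_at G0 e (i + t)) (goal_at G0 d (j + t))" for t
  proof (induction t)
    case 0
    have "pSLD P S G0 (enat i) d" using pSLD_mono[OF d] ij by simp
    then show ?case using vr by auto
  next
    case (Suc t)
    then obtain e where e: "pSLD P S G0 (enat (i + t)) e" "var_rel (goal_at G0 e (i + t)) (goal_at G0 d (j + t))"
      by auto
    have lt: "enat (j + t) < enat m" using Suc.prems ij by simp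
    have s: "d (j + t) \<in> S" "st_clause (d (j + t)) \<in> P" "st_src (d (j + t)) = goal_at G0 d (j + t)"
      using d lt unfolding pSLD_def by blast+
    obtain s' where s': "pSLD P S G0 (enat (Suc (i + t))) (e(i + t := s'))"
      "var_rel (st_tgt (d (j + t))) (st_tgt s')"
      using ext1[OF inf S G0 e(1) s(1) s(2)] e(2) s(3) by auto
    have "goal_at G0 (e(i + t := s')) (Suc (i + t)) = st_tgt s'" by simp
    then have "var_rel (goal_at G0 (e(i + t := s')) (i + Suc t)) (goal_at G0 d (j + Suc t))"
      using var_rel_sym[OF s'(2)] by simp
    then show ?case using s'(1) by (metis add_Suc_right)
  qed
  obtain e where e: "pSLD P S G0 (enat (i + (m - j))) e" "var_rel (goal_at G0 e (i + (m - j))) (goal_at G0 d (j + (m - j)))"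
    using claim[of "m - j"] by auto
  have "j + (m - j) = m" using ij by simp
  then show ?thesis using e var_rel_card[OF e(2)] by auto
qed

lemma card_step:
  assumes "is_step s"
  shows "card (st_tgt s) \<le> card (st_src s) + card (snd (st_clause s))"
proof -
  obtain G c \<xi> \<theta> \<pi> T where s: "s = PStep G c \<xi> \<theta> \<pi> T" by (cases s)
  obtain h B where c: "c = (h, B)" by (cases c)
  from assms obtain a F where pg: "is_pgoal G" and cc: "is_clause c" and sp: "pgoal_split G a F" and
    T: "T = subst_goal \<theta> (F \<union> shift_goal \<pi> (subst_goal \<xi> B))"
    by (auto simp: is_step_def Let_def s c)
  have fG: "finite G" using pg by (simp add: is_pgoal_def)
  have FG: "F \<subseteq> G" using sp by (auto simp: pgoal_split_def)
  have fF: "finite F" using fG FG finite_subset by blast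
  have fB: "finite B" using cc c by (simp add: is_clause_def is_pgoal_def)
  have "card T \<le> card (F \<union> shift_goal \<pi> (subst_goal \<xi> B))"
    unfolding T subst_goal_def using fF fB by (intro card_image_le) simp
  also have "\<dots> \<le> card F + card (shift_goal \<pi> (subst_goal \<xi> B))" by (rule card_Un_le)
  also have "card (shift_goal \<pi> (subst_goal \<xi> B)) \<le> card (subst_goal \<xi> B)"
    unfolding shift_goal_def using fB by (intro card_image_le) simp
  also have "card (subst_goal \<xi> B) \<le> card B"
    unfolding subst_goal_def using fB by (intro card_image_le) simp
  also have "card F \<le> card G" using card_mono[OF fG FG] .
  finally show ?thesis by (simp add: s c)
qed

lemma card_bound:
  assumes P: "program P" and d: "pSLD P S G0 (enat n) d"
  shows "card (goal_at G0 d n) \<le> card G0 + n * (\<Sum>c\<in>P. card (snd c))"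
  using d
proof (induction n)
  case 0 then show ?case by simp
next
  case (Suc n)
  have dn: "pSLD P S G0 (enat n) d" using pSLD_mono[OF Suc.prems] by simp
  have "enat n < enat (Suc n)" by simp
  then have st: "is_step (d n)" and cP: "st_clause (d n) \<in> P" and src: "st_src (d n) = goal_at G0 d n"
    using Suc.prems unfolding pSLD_def by blast+
  have "card (snd (st_clause (d n))) \<le> (\<Sum>c\<in>P. card (snd c))"
    using P cP by (intro member_le_sum) (auto simp: program_def)
  then show ?case using card_step[OF st] src Suc.IH[OF dn] by simp
qed


definition NPd :: "('f, 'v) clause set \<Rightarrow> ('f, 'v) pstep set \<Rightarrow> ('f, 'v) pgoal \<Rightarrow> (nat \<Rightarrow> ('f, 'v) pstep) \<Rightarrow> nat \<Rightarrow> bool" where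
  "NPd P S G0 d n \<longleftrightarrow> pSLD P S G0 (enat n) d \<and>
     (\<forall>i j. i < j \<and> j \<le> n \<longrightarrow> \<not> var_rel (goal_at G0 d i) (goal_at G0 d j))"

lemma claimA:
  fixes d :: "nat \<Rightarrow> ('f, 'v) pstep"
  assumes inf: "infinite (UNIV :: 'v set)" and S: "scheduling_rule S" and G0: "is_pgoal G0"
  shows "pSLD P S G0 (enat m) d \<Longrightarrow> \<exists>d' m'. NPd P S G0 d' m' \<and> card (goal_at G0 d' m') = card (goal_at G0 d m)"
proof (induction m arbitrary: d rule: less_induct)
  case (less m)
  show ?case
  proof (cases "NPd P S G0 d m")
    case True then show ?thesis by blast
  next
    case False
    then obtain i j where ij: "i < j" "j \<le> m" "var_rel (goal_at G0 d i) (goal_at G0 d j)"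
      using less.prems by (auto simp: NPd_def)
    obtain d' where d': "pSLD P S G0 (enat (i + (m - j))) d'"
      "card (goal_at G0 d' (i + (m - j))) = card (goal_at G0 d m)"
      using reduction[OF inf S G0 less.prems ij] by blast
    have "i + (m - j) < m" using ij by simp
    then show ?thesis using less.IH[OF _ d'(1)] d'(2) by metis
  qed
qed

lemma claimB:
  fixes P :: "('f, 'v) clause set" and G :: "('f, 'v) pgoal"
  assumes inf: "infinite (UNIV :: 'v set)" and prog: "program P" and G0: "is_pgoal G"
    and S: "scheduling_rule S" and H: "\<forall>ds. pSLD P S G \<infinity> ds \<longrightarrow> pruned_EVR G \<infinity> ds"
  shows "\<exists>L. \<forall>d n. NPd P S G d n \<longrightarrow> n \<le> L"
proof (rule ccontr)
  assume "\<not> (\<exists>L. \<forall>d n. NPd P S G d n \<longrightarrow> n \<le> L)"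
  then have unb: "\<forall>L. \<exists>d n. NPd P S G d n \<and> L < n" by (meson not_le)
  have finP: "finite P" using prog by (simp add: program_def)
  define good where "good w \<longleftrightarrow> (\<forall>N. \<exists>d n. NPd P S G d n \<and> N \<le> n \<and> length w \<le> n \<and>
      (\<forall>k<length w. st_clause (d k) = w ! k))" for w
  have good0: "good []" unfolding good_def
  proof (intro allI)
    fix N
    obtain d n where dn: "NPd P S G d n" "N < n" using unb by blast
    then have "N \<le> n" by simp
    then show "\<exists>d n. NPd P S G d n \<and> N \<le> n \<and> length [] \<le> n \<and> (\<forall>k<length []. st_clause (d k) = [] ! k)"
      using dn(1) \<open>N \<le> n\<close> by (intro exI[of _ d] exI[of _ n]) simp
  qed
  have goodS: "\<exists>c\<in>P. good (w @ [c])" if gw: "good w" for w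
  proof (rule ccontr)
    assume "\<not> (\<exists>c\<in>P. good (w @ [c]))"
    then have "\<forall>c\<in>P. \<exists>N. \<forall>d n. \<not> (NPd P S G d n \<and> N \<le> n \<and> length (w @ [c]) \<le> n \<and>
      (\<forall>k<length (w @ [c]). st_clause (d k) = (w @ [c]) ! k))"
      unfolding good_def by blast
    then have "\<exists>Nf. \<forall>c\<in>P. \<forall>d n. \<not> (NPd P S G d n \<and> Nf c \<le> n \<and> length (w @ [c]) \<le> n \<and>
      (\<forall>k<length (w @ [c]). st_clause (d k) = (w @ [c]) ! k))" by (rule bchoice)
    then obtain Nf where Nf: "\<forall>c\<in>P. \<forall>d n. \<not> (NPd P S G d n \<and> Nf c \<le> n \<and> length (w @ [c]) \<le> n \<and>
      (\<forall>k<length (w @ [c]). st_clause (d k) = (w @ [c]) ! k))"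
      by (elim exE)
    define N where "N = (\<Sum>c\<in>P. Nf c) + Suc (length w)"
    obtain d n where dn: "NPd P S G d n" "N \<le> n" "length w \<le> n" "\<forall>k<length w. st_clause (d k) = w ! k"
      using gw unfolding good_def by blast
    have lw: "length w < n" using dn(2) by (simp add: N_def)
    then have "enat (length w) < enat n" by simp
    then have cP: "st_clause (d (length w)) \<in> P" using dn(1) by (simp add: NPd_def pSLD_def)
    define c where "c = st_clause (d (length w))"
    have "Nf c \<le> (\<Sum>c\<in>P. Nf c)" using finP cP by (intro member_le_sum) (auto simp: c_def)
    then have "Nf c \<le> n" using dn(2) by (simp add: N_def)
    moreover have "\<forall>k<length (w @ [c]). st_clause (d k) = (w @ [c]) ! k"
      using dn(4) by (auto simp: nth_append c_def less_Suc_eq)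
    moreover have "length (w @ [c]) \<le> n" using lw by simp
    moreover have "\<not> (NPd P S G d n \<and> Nf c \<le> n \<and> length (w @ [c]) \<le> n \<and>
      (\<forall>k<length (w @ [c]). st_clause (d k) = (w @ [c]) ! k))"
      using Nf cP unfolding c_def by blast
    ultimately show False using dn(1) by blast
  qed
  define cs where "cs = rec_nat [] (\<lambda>k w. w @ [SOME c. c \<in> P \<and> good (w @ [c])])"
  have cs0: "cs 0 = []" by (simp add: cs_def)
  have csS: "cs (Suc k) = cs k @ [SOME c. c \<in> P \<and> good (cs k @ [c])]" for k by (simp add: cs_def)
  have csgood: "good (cs k) \<and> length (cs k) = k" for k
  proof (induction k)
    case 0 then show ?case using good0 cs0 by simp
  next
    case (Suc k)
    then have "\<exists>c. c \<in> P \<and> good (cs k @ [c])" using goodS by blast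
    then have "(SOME c. c \<in> P \<and> good (cs k @ [c])) \<in> P \<and> good (cs k @ [SOME c. c \<in> P \<and> good (cs k @ [c])])"
      by (rule someI_ex)
    then show ?case using Suc csS by simp
  qed
  define cl where "cl i = cs (Suc i) ! i" for i
  have csnth: "i < k \<Longrightarrow> cs k ! i = cl i" for i k
  proof (induction k)
    case 0 then show ?case by simp
  next
    case (Suc k)
    show ?case
    proof (cases "i < k")
      case True then show ?thesis using Suc csS csgood by (simp add: nth_append)
    next
      case False then have "i = k" using Suc.prems by simp
      then show ?thesis by (simp add: cl_def)
    qed
  qed
  have good': "\<forall>N. \<exists>d n. NPd P S G d n \<and> N \<le> n \<and> k \<le> n \<and> (\<forall>i<k. st_clause (d i) = cl i)" for k
    using csgood[of k] csnth unfolding good_def by metis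
  define D where "D = rec_nat (\<lambda>_. undefined) (\<lambda>n Dn. SOME e. pSLD P S G (enat (Suc n)) e \<and>
      (\<forall>k<n. e k = Dn k) \<and> (\<forall>k<Suc n. st_clause (e k) = cl k))"
  have DS: "D (Suc n) = (SOME e. pSLD P S G (enat (Suc n)) e \<and>
      (\<forall>k<n. e k = D n k) \<and> (\<forall>k<Suc n. st_clause (e k) = cl k))" for n
    by (simp add: D_def)
  have Dinv: "pSLD P S G (enat n) (D n) \<and> (\<forall>k<n. st_clause (D n k) = cl k)" for n
  proof (induction n)
    case 0 then show ?case by (simp add: pSLD_def zero_enat_def[symmetric])
  next
    case (Suc n)
    obtain W m where W: "NPd P S G W m" "Suc n \<le> m" "\<forall>i<Suc n. st_clause (W i) = cl i"
      using good'[of "Suc n"] by blast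
    have Wp: "pSLD P S G (enat m) W" using W(1) by (simp add: NPd_def)
    have vr: "var_rel (goal_at G (D n) n) (goal_at G W n)"
      using sameclauses[OF S conjunct1[OF Suc.IH] Wp, where k=n] Suc.IH W(2,3) by simp
    have "enat n < enat m" using W(2) by simp
    then have Wn: "W n \<in> S" "st_clause (W n) \<in> P" "st_src (W n) = goal_at G W n"
      using Wp unfolding pSLD_def by blast+
    obtain s' where s': "pSLD P S G (enat (Suc n)) ((D n)(n := s'))" "st_clause s' = st_clause (W n)"
      using ext1[OF inf S G0 _ Wn(1) Wn(2)] Suc.IH vr Wn(3) by metis
    have "\<exists>e. pSLD P S G (enat (Suc n)) e \<and> (\<forall>k<n. e k = D n k) \<and> (\<forall>k<Suc n. st_clause (e k) = cl k)"
    proof (intro exI conjI)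
      show "pSLD P S G (enat (Suc n)) ((D n)(n := s'))" using s'(1) .
      show "\<forall>k<n. ((D n)(n := s')) k = D n k" by simp
      show "\<forall>k<Suc n. st_clause (((D n)(n := s')) k) = cl k"
        using Suc.IH s'(2) W(3) by (auto simp: less_Suc_eq)
    qed
    then have "pSLD P S G (enat (Suc n)) (D (Suc n)) \<and> (\<forall>k<n. D (Suc n) k = D n k) \<and>
        (\<forall>k<Suc n. st_clause (D (Suc n) k) = cl k)"
      unfolding DS by (rule someI_ex)
    then show ?case by simp
  qed
  have Dagree: "\<forall>k<n. D (Suc n) k = D n k" for n
  proof -
    obtain W m where W: "NPd P S G W m" "Suc n \<le> m" "\<forall>i<Suc n. st_clause (W i) = cl i"
      using good'[of "Suc n"] by blast
    have Wp: "pSLD P S G (enat m) W" using W(1) by (simp add: NPd_def)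
    have vr: "var_rel (goal_at G (D n) n) (goal_at G W n)"
      using sameclauses[OF S conjunct1[OF Dinv[of n]] Wp, where k=n] Dinv[of n] W(2,3) by simp
    have "enat n < enat m" using W(2) by simp
    then have Wn: "W n \<in> S" "st_clause (W n) \<in> P" "st_src (W n) = goal_at G W n"
      using Wp unfolding pSLD_def by blast+
    obtain s' where s': "pSLD P S G (enat (Suc n)) ((D n)(n := s'))" "st_clause s' = st_clause (W n)"
      using ext1[OF inf S G0 _ Wn(1) Wn(2)] Dinv[of n] vr Wn(3) by metis
    have "\<exists>e. pSLD P S G (enat (Suc n)) e \<and> (\<forall>k<n. e k = D n k) \<and> (\<forall>k<Suc n. st_clause (e k) = cl k)"
    proof (intro exI conjI)
      show "pSLD P S G (enat (Suc n)) ((D n)(n := s'))" using s'(1) .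
      show "\<forall>k<n. ((D n)(n := s')) k = D n k" by simp
      show "\<forall>k<Suc n. st_clause (((D n)(n := s')) k) = cl k"
        using Dinv[of n] s'(2) W(3) by (auto simp: less_Suc_eq)
    qed
    then have "pSLD P S G (enat (Suc n)) (D (Suc n)) \<and> (\<forall>k<n. D (Suc n) k = D n k) \<and>
        (\<forall>k<Suc n. st_clause (D (Suc n) k) = cl k)"
      unfolding DS by (rule someI_ex)
    then show ?thesis by simp
  qed
  have Dstable: "k < m \<Longrightarrow> D m k = D (Suc k) k" for k m
  proof (induction m)
    case 0 then show ?case by simp
  next
    case (Suc m)
    show ?case
    proof (cases "k < m")
      case True then show ?thesis using Suc Dagree by simp
    next
      case False then have "k = m" using Suc.prems by simp
      then show ?thesis by simp
    qed
  qed
  define dinf where "dinf k = D (Suc k) k" for k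
  have gat: "k \<le> m \<Longrightarrow> goal_at G dinf k = goal_at G (D m) k" for k m
  proof (induction k)
    case 0 then show ?case by simp
  next
    case (Suc k)
    then have "k < m" by simp
    then have "D m k = D (Suc k) k" by (rule Dstable)
    then show ?case by (simp add: dinf_def)
  qed
  have "pSLD P S G \<infinity> dinf"
    unfolding pSLD_def
  proof (intro allI impI)
    fix j
    have p: "pSLD P S G (enat (Suc j)) (D (Suc j))" using Dinv by blast
    have "enat j < enat (Suc j)" by simp
    then have c: "is_step (D (Suc j) j) \<and> D (Suc j) j \<in> S \<and> st_clause (D (Suc j) j) \<in> P \<and>
        st_src (D (Suc j) j) = goal_at G (D (Suc j)) j \<and>
        vars_clause (renamed_clause (D (Suc j) j)) \<inter>
          (vars_goal G \<union> (\<Union>i<j. vars_clause (renamed_clause (D (Suc j) i)))) = {}"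
      using p unfolding pSLD_def by blast
    have u: "(\<Union>i<j. vars_clause (renamed_clause (D (Suc j) i))) = (\<Union>i<j. vars_clause (renamed_clause (dinf i)))"
    proof (rule SUP_cong)
      fix i assume "i \<in> {..<j}"
      then have "i < Suc j" by simp
      then have "D (Suc j) i = D (Suc i) i" by (rule Dstable)
      then show "vars_clause (renamed_clause (D (Suc j) i)) = vars_clause (renamed_clause (dinf i))"
        by (simp add: dinf_def)
    qed simp
    have g: "goal_at G (D (Suc j)) j = goal_at G dinf j" using gat[of j "Suc j"] by simp
    show "is_step (dinf j) \<and> dinf j \<in> S \<and> st_clause (dinf j) \<in> P \<and> st_src (dinf j) = goal_at G dinf j \<and>
        vars_clause (renamed_clause (dinf j)) \<inter>
          (vars_goal G \<union> (\<Union>i<j. vars_clause (renamed_clause (dinf i)))) = {}"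
      using c u g by (simp add: dinf_def)
  qed
  then have "pruned_EVR G \<infinity> dinf" using H by blast
  then obtain i j \<tau> \<tau>s where ij: "i < j" "renaming \<tau>" "shifting \<tau>s"
    "goal_at G dinf j = shift_goal \<tau>s (subst_goal \<tau> (goal_at G dinf i))"
    unfolding pruned_EVR_def by blast
  have "var_rel (goal_at G dinf i) (goal_at G dinf j)"
    using ij renaming_E[OF ij(2)] unfolding var_rel_def by blast
  then have vrD: "var_rel (goal_at G (D j) i) (goal_at G (D j) j)"
    using gat[of i j] gat[of j j] ij(1) by simp
  obtain W m where W: "NPd P S G W m" "j \<le> m" "\<forall>k<j. st_clause (W k) = cl k"
    using good'[of j] by blast
  have Wp: "pSLD P S G (enat m) W" using W(1) by (simp add: NPd_def)
  have Dj: "pSLD P S G (enat j) (D j)" "\<forall>k<j. st_clause (D j k) = cl k" using Dinv by blast+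
  have v1: "var_rel (goal_at G (D j) i) (goal_at G W i)"
    using sameclauses[OF S Dj(1) Wp, where k=i] ij(1) W(2,3) Dj(2) by simp
  have v2: "var_rel (goal_at G (D j) j) (goal_at G W j)"
    using sameclauses[OF S Dj(1) Wp, where k=j] W(2,3) Dj(2) by simp
  have "var_rel (goal_at G W i) (goal_at G W j)"
    using var_rel_trans[OF var_rel_sym[OF v1] var_rel_trans[OF vrD v2]] .
  then show False using W(1) W(2) ij(1) by (auto simp: NPd_def)
qed

theorem lemmaL5p2p1:
  fixes P :: "('f, 'v) clause set" and G :: "('f, 'v) pgoal" and S :: "('f, 'v) pstep set"
  assumes "infinite (UNIV :: 'v set)"
    and "program P"
    and "is_pgoal G"
    and "scheduling_rule S"
    and "\<forall>ds. pSLD P S G \<infinity> ds \<longrightarrow> pruned_EVR G \<infinity> ds"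
  shows "\<exists>l::nat. \<forall>n ds j. pSLD P S G n ds \<and> enat j \<le> n \<longrightarrow> card (goal_at G ds j) \<le> l"
proof -
  obtain L where L: "\<forall>d n. NPd P S G d n \<longrightarrow> n \<le> L" using claimB[OF assms] by blast
  define M where "M = (\<Sum>c\<in>P. card (snd c))"
  have "card (goal_at G ds j) \<le> card G + L * M" if "pSLD P S G n ds" "enat j \<le> n" for n ds j
  proof -
    have "pSLD P S G (enat j) ds" using pSLD_mono that by blast
    then obtain d' m' where d': "NPd P S G d' m'" "card (goal_at G d' m') = card (goal_at G ds j)"
      using claimA[OF assms(1) assms(4) assms(3)] by blast
    have "m' \<le> L" using L d'(1) by blast
    have "card (goal_at G d' m') \<le> card G + m' * M"
      using card_bound[OF assms(2), of S G m' d'] d'(1) by (simp add: NPd_def M_def)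
    also have "\<dots> \<le> card G + L * M" using \<open>m' \<le> L\<close> by simp
    finally show ?thesis using d'(2) by simp
  qed
  then show ?thesis by blast
qed

end
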